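(* Let $\mathfrak g=\mathcal W_1^{++}=\mathrm{Span}\{d_i: i\in\mathbb Z_+\}$ with brackets $[d_m,d_n]=(m-n)d_{m+n}$. Fix $k\in\mathbb N$ and let $\mathfrak p_k=\mathrm{Span}\{d_i: i\ge k\}$. Let $\phi_k:\mathfrak p_k\to\mathbb C$ be a nonzero Lie algebra homomorphism. Then the universal quasi-Whittaker module $W(\phi_k)=\mathcal U(\mathfrak g)\otimes_{\mathcal U(\mathfrak p_k)}\mathbb C w_{\phi_k}$ is irreducible if and only if $\phi_k(d_{2k-1})\neq0$ or $\phi_k(d_{2k})\neq0$.
   Context: $\mathbb Z_+$ denotes the nonnegative integers and $\mathbb N$ the positive integers. A Lie algebra homomorphism $\phi_k:\mathfrak p_k\to\mathbb C$ is a linear map vanishing on $[\mathfrak p_k,\mathfrak p_k]=\mathrm{Span}\{d_i:i\ge 2k+1\}$. $\mathbb C w_{\phi_k}$ is the one-dimensional $\mathfrak p_k$-module with $pw_{\phi_k}=\phi_k(p)w_{\phi_k}$. *)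

theory Defs
  imports Complex_Main "HOL-Library.Function_Algebras"
begin

text \<open>
  The tensor algebra T(g) is represented as finitely supported functions
  nat list \<Rightarrow> complex (the word [i1,...,ir] standing for d_i1 ... d_ir).
  U(g) = T(g)/I where I is the two-sided ideal generated by
  d_i d_j - d_j d_i - (i - j) d_{i+j}; and
  U(g) \<otimes>_{U(p_k)} C w = U(g) / U(g) (p - phi(p) : p in p_k) = T(g) / J,
  where J = I + T(g) (d_i - phi(d_i) : i \<ge> k).
  The g-action on the quotient is left multiplication by the letters d_i.
\<close>

type_synonym tens = "nat list \<Rightarrow> complex"

definition tscale :: "complex \<Rightarrow> tens \<Rightarrow> tens" where
  "tscale c f = (\<lambda>x. c * f x)"

definition Tens :: "tens set" where
  "Tens = {f. finite {x. f x \<noteq> 0}}"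

definition word :: "nat list \<Rightarrow> tens" where
  "word w = (\<lambda>x. if x = w then 1 else 0)"

definition lmul :: "nat \<Rightarrow> tens \<Rightarrow> tens" where
  "lmul i f = (\<lambda>x. case x of [] \<Rightarrow> 0 | j # y \<Rightarrow> (if j = i then f y else 0))"

definition lie_rels :: "tens set" where
  "lie_rels = {word (a @ [i, j] @ b) - word (a @ [j, i] @ b)
               - tscale (of_int (int i - int j)) (word (a @ [i + j] @ b)) | a b i j. True}"

definition whit_rels :: "nat \<Rightarrow> (nat \<Rightarrow> complex) \<Rightarrow> tens set" where
  "whit_rels k phi = {word (a @ [i]) - tscale (phi i) (word a) | a i. k \<le> i}"

definition Jrel :: "nat \<Rightarrow> (nat \<Rightarrow> complex) \<Rightarrow> tens set" where
  "Jrel k phi = module.span tscale (lie_rels \<union> whit_rels k phi)"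

text \<open>g-submodules of T(g)/J correspond to subspaces S of T(g) with J \<subseteq> S,
  closed under the action of all d_i.  W(phi_k) is irreducible iff it is nonzero
  (J \<noteq> T(g)) and its only submodules are 0 (S = J) and itself (S = T(g)).\<close>
definition quasi_whittaker_irreducible :: "nat \<Rightarrow> (nat \<Rightarrow> complex) \<Rightarrow> bool" where
  "quasi_whittaker_irreducible k phi \<longleftrightarrow>
     Jrel k phi \<noteq> Tens \<and>
     (\<forall>S. module.subspace tscale S \<and> Jrel k phi \<subseteq> S \<and> S \<subseteq> Tens \<and>
          (\<forall>i. \<forall>f\<in>S. lmul i f \<in> S)
          \<longrightarrow> S = Jrel k phi \<or> S = Tens)"

end

theory Submission
  imports Defs "HOL-Library.Multiset"
begin


declare plus_fun_apply[simp del] zero_fun_apply[simp del] minus_apply[simp del] uminus_apply[simp del]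

interpretation T: module tscale
  by standard (auto simp: tscale_def algebra_simps fun_eq_iff plus_fun_apply)

lemma tscale_apply: "tscale c f x = c * f x" by (simp add: tscale_def)

lemmas pw = plus_fun_apply zero_fun_apply minus_apply uminus_apply tscale_apply

lemma sum_fun_apply: "(\<Sum>a\<in>A. f a) x = (\<Sum>a\<in>A. f a x)"
  by (induct A rule: infinite_finite_induct) (auto simp: pw)

lemma word_apply: "word w x = (if x = w then 1 else 0)" by (simp add: word_def)

lemma Tens_iff: "f \<in> Tens \<longleftrightarrow> finite {x. f x \<noteq> 0}" by (simp add: Tens_def)

lemma Tens_zero[simp]: "0 \<in> Tens" by (simp add: Tens_def pw)

lemma Tens_add[intro]: "f \<in> Tens \<Longrightarrow> g \<in> Tens \<Longrightarrow> f + g \<in> Tens"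
proof -
  assume "f \<in> Tens" "g \<in> Tens"
  moreover have "{x. (f + g) x \<noteq> 0} \<subseteq> {x. f x \<noteq> 0} \<union> {x. g x \<noteq> 0}" by (auto simp: pw)
  ultimately show ?thesis unfolding Tens_def by (auto intro: finite_subset)
qed

lemma Tens_scale[intro]: "f \<in> Tens \<Longrightarrow> tscale c f \<in> Tens"
  unfolding Tens_def by (auto simp: pw elim!: finite_subset[rotated])

lemma Tens_subspace: "T.subspace Tens"
  by (auto simp: T.subspace_def Tens_add Tens_scale)

lemma Tens_diff[intro]: "f \<in> Tens \<Longrightarrow> g \<in> Tens \<Longrightarrow> f - g \<in> Tens"
  using T.subspace_diff[OF Tens_subspace] by blast

lemma Tens_sum[intro]: "(\<And>a. a \<in> A \<Longrightarrow> f a \<in> Tens) \<Longrightarrow> sum f A \<in> Tens"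
  using T.subspace_sum[OF Tens_subspace] by blast

lemma word_Tens[simp,intro]: "word w \<in> Tens"
  by (simp add: Tens_def word_def)

lemma lmul_word[simp]: "lmul i (word a) = word (i # a)"
  by (auto simp: lmul_def word_def fun_eq_iff pw split: list.splits)

lemma lmul_add: "lmul i (f + g) = lmul i f + lmul i g"
  by (auto simp: lmul_def fun_eq_iff pw split: list.splits)
lemma lmul_scale: "lmul i (tscale c f) = tscale c (lmul i f)"
  by (auto simp: lmul_def fun_eq_iff pw split: list.splits)
lemma lmul_zero[simp]: "lmul i 0 = 0"
  by (auto simp: lmul_def fun_eq_iff pw split: list.splits)
lemma lmul_diff: "lmul i (f - g) = lmul i f - lmul i g"
  by (auto simp: lmul_def fun_eq_iff pw split: list.splits)
lemma lmul_sum: "lmul i (sum f A) = (\<Sum>a\<in>A. lmul i (f a))"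
  by (auto simp: lmul_def fun_eq_iff sum_fun_apply pw split: list.splits)

lemma lmul_Tens[intro]: "f \<in> Tens \<Longrightarrow> lmul i f \<in> Tens"
proof -
  assume "f \<in> Tens"
  hence "finite ((\<lambda>y. i # y) ` {x. f x \<noteq> 0})" by (simp add: Tens_def)
  moreover have "{x. lmul i f x \<noteq> 0} \<subseteq> (\<lambda>y. i # y) ` {x. f x \<noteq> 0}"
  proof
    fix x assume "x \<in> {x. lmul i f x \<noteq> 0}"
    then show "x \<in> (\<lambda>y. i # y) ` {x. f x \<noteq> 0}"
      by (cases x) (auto simp: lmul_def split: if_splits)
  qed
  ultimately show ?thesis by (simp add: Tens_def finite_subset)
qed

lemma tens_decomp:
  assumes "f \<in> Tens" "finite A" "{x. f x \<noteq> 0} \<subseteq> A"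
  shows "f = (\<Sum>a\<in>A. tscale (f a) (word a))"
proof
  fix x
  have "(\<Sum>a\<in>A. tscale (f a) (word a)) x = (\<Sum>a\<in>A. if a = x then f a else 0)"
    by (simp add: sum_fun_apply word_apply pw) (rule sum.cong, auto)
  also have "\<dots> = f x" using assms by (auto simp: sum.delta')
  finally show "f x = (\<Sum>a\<in>A. tscale (f a) (word a)) x" by simp
qed

lemma tens_decomp': "f \<in> Tens \<Longrightarrow> f = (\<Sum>a | f a \<noteq> 0. tscale (f a) (word a))"
  by (rule tens_decomp) (auto simp: Tens_def)

abbreviation J where "J k phi \<equiv> Jrel k phi"

lemma J_subspace: "T.subspace (Jrel k phi)"
  by (simp add: Jrel_def)

lemma gens_Tens: "lie_rels \<union> whit_rels k phi \<subseteq> Tens"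
  by (auto simp: lie_rels_def whit_rels_def)

lemma J_Tens: "Jrel k phi \<subseteq> Tens"
  unfolding Jrel_def by (rule T.span_minimal[OF gens_Tens Tens_subspace])

lemma J_base: "x \<in> lie_rels \<union> whit_rels k phi \<Longrightarrow> x \<in> Jrel k phi"
  unfolding Jrel_def by (rule T.span_base)

lemma J_add: "x \<in> Jrel k phi \<Longrightarrow> y \<in> Jrel k phi \<Longrightarrow> x + y \<in> Jrel k phi"
  using T.subspace_add[OF J_subspace] by blast
lemma J_diff: "x \<in> Jrel k phi \<Longrightarrow> y \<in> Jrel k phi \<Longrightarrow> x - y \<in> Jrel k phi"
  using T.subspace_diff[OF J_subspace] by blast
lemma J_scale: "x \<in> Jrel k phi \<Longrightarrow> tscale c x \<in> Jrel k phi"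
  using T.subspace_scale[OF J_subspace] by blast
lemma J_zero: "0 \<in> Jrel k phi"
  using T.subspace_0[OF J_subspace] by blast
lemma J_sum: "(\<And>a. a \<in> A \<Longrightarrow> f a \<in> Jrel k phi) \<Longrightarrow> sum f A \<in> Jrel k phi"
  using T.subspace_sum[OF J_subspace] by blast

lemma lie_in_J: "word (a @ [i, j] @ b) - word (a @ [j, i] @ b)
               - tscale (of_int (int i - int j)) (word (a @ [i + j] @ b)) \<in> Jrel k phi"
  by (rule J_base) (auto simp: lie_rels_def)

lemma whit_in_J: "k \<le> i \<Longrightarrow> word (a @ [i]) - tscale (phi i) (word a) \<in> Jrel k phi"
  by (rule J_base) (auto simp: whit_rels_def)

lemma J_lmul: "x \<in> Jrel k phi \<Longrightarrow> lmul i x \<in> Jrel k phi"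
proof -
  assume "x \<in> Jrel k phi"
  then show ?thesis unfolding Jrel_def
  proof (induct rule: T.span_induct_alt)
    case base then show ?case by (metis lmul_zero T.span_zero)
  next
    case (step c x y)
    have "lmul i x \<in> lie_rels \<union> whit_rels k phi"
      using step(1)
    proof
      assume "x \<in> lie_rels"
      then obtain a b p q where "x = word (a @ [p, q] @ b) - word (a @ [q, p] @ b)
               - tscale (of_int (int p - int q)) (word (a @ [p + q] @ b))"
        unfolding lie_rels_def by blast
      then have "lmul i x = word ((i#a) @ [p, q] @ b) - word ((i#a) @ [q, p] @ b)
               - tscale (of_int (int p - int q)) (word ((i#a) @ [p + q] @ b))"
        by (simp add: lmul_diff lmul_scale)
      then show ?thesis unfolding lie_rels_def by blast
    next
      assume "x \<in> whit_rels k phi"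
      then obtain a p where "k \<le> p" "x = word (a @ [p]) - tscale (phi p) (word a)"
        unfolding whit_rels_def by blast
      then have "k \<le> p" "lmul i x = word ((i#a) @ [p]) - tscale (phi p) (word (i#a))"
        by (simp_all add: lmul_diff lmul_scale)
      then show ?thesis unfolding whit_rels_def by blast
    qed
    then have "tscale c (lmul i x) \<in> T.span (lie_rels \<union> whit_rels k phi)"
      by (intro T.span_scale T.span_base)
    then show ?case using step(2) unfolding lmul_add lmul_scale
      by (rule T.span_add)
  qed
qed

definition lmulw :: "nat list \<Rightarrow> tens \<Rightarrow> tens" where
  "lmulw a f = foldr lmul a f"

lemma lmulw_word: "lmulw a (word b) = word (a @ b)"
  by (induct a) (auto simp: lmulw_def)

lemma closed_lmulw: "(\<forall>i. \<forall>f\<in>S. lmul i f \<in> S) \<Longrightarrow> f \<in> S \<Longrightarrow> lmulw a f \<in> S"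
  by (induct a) (auto simp: lmulw_def)

lemma all_from_empty:
  assumes sub: "T.subspace S" and cl: "\<forall>i. \<forall>f\<in>S. lmul i f \<in> S" and e: "word [] \<in> S"
  shows "Tens \<subseteq> S"
proof
  fix f assume f: "f \<in> Tens"
  have "word a \<in> S" for a using closed_lmulw[OF cl e, of a] by (simp add: lmulw_word)
  then have "(\<Sum>a | f a \<noteq> 0. tscale (f a) (word a)) \<in> S"
    by (intro T.subspace_sum[OF sub] T.subspace_scale[OF sub])
  then show "f \<in> S" using tens_decomp'[OF f] by simp
qed

lemma J_all: "word [] \<in> Jrel k phi \<Longrightarrow> Jrel k phi = Tens"
  using all_from_empty[OF J_subspace, of k phi] J_lmul J_Tens by blast


definition fib :: "tens \<Rightarrow> nat \<Rightarrow> tens" where "fib F a = (\<lambda>rest. F (a # rest))"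

definition ymul :: "tens \<Rightarrow> tens" where
  "ymul F = (\<lambda>l. case l of [] \<Rightarrow> 0 | a # rest \<Rightarrow> (if a = 0 then 0 else F ((a - 1) # rest)))"

definition Q :: "nat \<Rightarrow> complex \<Rightarrow> nat \<Rightarrow> complex" where
  "Q j \<alpha> r = of_nat j ^ r * pochhammer (\<alpha> / of_nat j) r"

definition cc :: "nat \<Rightarrow> nat \<Rightarrow> nat \<Rightarrow> complex" where
  "cc j n r = Q j (of_nat n - of_nat j) r"

primrec lop :: "nat \<Rightarrow> (nat \<Rightarrow> complex) \<Rightarrow> nat \<Rightarrow> nat \<Rightarrow> tens \<Rightarrow> tens" where
  "lop k psi 0 n F = tscale (psi n) F"
| "lop k psi (Suc L) n F = (if n = k - Suc L then ymul F else
     (\<lambda>l. case l of [] \<Rightarrow> 0 | a # rest \<Rightarrow>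
        (\<Sum>s\<le>2*k+1. (cc (k - Suc L) n s * of_nat ((a+s) choose s))
            * lop k psi L (n + s*(k - Suc L)) (fib F (a+s)) rest)))"

lemma Q_Suc1: "j \<noteq> 0 \<Longrightarrow> Q j \<alpha> (Suc r) = \<alpha> * Q j (\<alpha> + of_nat j) r"
  by (simp add: Q_def pochhammer_rec field_simps)

lemma Q_Suc2: "j \<noteq> 0 \<Longrightarrow> Q j \<alpha> (Suc r) = Q j \<alpha> r * (\<alpha> + of_nat r * of_nat j)"
  by (simp add: Q_def pochhammer_Suc field_simps)

lemma Q_vandermonde: "j \<noteq> 0 \<Longrightarrow>
  (\<Sum>r\<le>t. of_nat (t choose r) * Q j \<alpha> r * Q j \<beta> (t - r)) = Q j (\<alpha> + \<beta>) t"
proof -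
  assume j: "j \<noteq> 0"
  have "Q j (\<alpha> + \<beta>) t = of_nat j ^ t * pochhammer (\<alpha> / of_nat j + \<beta> / of_nat j) t"
    by (simp add: Q_def add_divide_distrib)
  also have "\<dots> = of_nat j ^ t * (\<Sum>r\<le>t. of_nat (t choose r) * pochhammer (\<alpha> / of_nat j) r * pochhammer (\<beta> / of_nat j) (t - r))"
    by (simp add: pochhammer_binomial_sum)
  also have "\<dots> = (\<Sum>r\<le>t. of_nat (t choose r) * Q j \<alpha> r * Q j \<beta> (t - r))"
    unfolding sum_distrib_left
  proof (rule sum.cong[OF refl])
    fix r assume "r \<in> {..t}"
    then have "of_nat j ^ t = (of_nat j ^ r * of_nat j ^ (t - r) :: complex)"
      by (simp flip: power_add)
    then show "of_nat j ^ t * (of_nat (t choose r) * pochhammer (\<alpha> / of_nat j) r * pochhammer (\<beta> / of_nat j) (t - r))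
        = of_nat (t choose r) * Q j \<alpha> r * Q j \<beta> (t - r)"
      by (simp add: Q_def)
  qed
  finally show ?thesis by simp
qed

lemma Q_identity: "j \<noteq> 0 \<Longrightarrow>
  (\<Sum>r\<le>t. of_nat (t choose r) * Q j \<alpha> r * Q j \<beta> (t - r)
      * ((\<alpha> + of_nat r * of_nat j) - (\<beta> + of_nat (t - r) * of_nat j)))
  = (\<alpha> - \<beta>) * Q j (\<alpha> + \<beta> + of_nat j) t"
proof -
  assume j: "j \<noteq> 0"
  have "(\<Sum>r\<le>t. of_nat (t choose r) * Q j \<alpha> r * Q j \<beta> (t - r)
      * ((\<alpha> + of_nat r * of_nat j) - (\<beta> + of_nat (t - r) * of_nat j)))
    = (\<Sum>r\<le>t. \<alpha> * (of_nat (t choose r) * Q j (\<alpha> + of_nat j) r * Q j \<beta> (t - r)))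
      - (\<Sum>r\<le>t. \<beta> * (of_nat (t choose r) * Q j \<alpha> r * Q j (\<beta> + of_nat j) (t - r)))"
    unfolding sum_subtractf[symmetric]
  proof (rule sum.cong[OF refl])
    fix r assume "r \<in> {..t}"
    have a: "Q j \<alpha> r * (\<alpha> + of_nat r * of_nat j) = \<alpha> * Q j (\<alpha> + of_nat j) r"
      using Q_Suc1[OF j] Q_Suc2[OF j] by metis
    have b: "Q j \<beta> (t - r) * (\<beta> + of_nat (t - r) * of_nat j) = \<beta> * Q j (\<beta> + of_nat j) (t - r)"
      using Q_Suc1[OF j] Q_Suc2[OF j] by metis
    show "of_nat (t choose r) * Q j \<alpha> r * Q j \<beta> (t - r)
      * ((\<alpha> + of_nat r * of_nat j) - (\<beta> + of_nat (t - r) * of_nat j))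
      = \<alpha> * (of_nat (t choose r) * Q j (\<alpha> + of_nat j) r * Q j \<beta> (t - r))
        - \<beta> * (of_nat (t choose r) * Q j \<alpha> r * Q j (\<beta> + of_nat j) (t - r))"
    proof -
      have "of_nat (t choose r) * Q j \<alpha> r * Q j \<beta> (t - r)
      * ((\<alpha> + of_nat r * of_nat j) - (\<beta> + of_nat (t - r) * of_nat j))
        = of_nat (t choose r) * Q j \<beta> (t - r) * (Q j \<alpha> r * (\<alpha> + of_nat r * of_nat j))
          - of_nat (t choose r) * Q j \<alpha> r * (Q j \<beta> (t - r) * (\<beta> + of_nat (t - r) * of_nat j))"
        by (simp only: algebra_simps)
      also have "\<dots> = of_nat (t choose r) * Q j \<beta> (t - r) * (\<alpha> * Q j (\<alpha> + of_nat j) r)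
          - of_nat (t choose r) * Q j \<alpha> r * (\<beta> * Q j (\<beta> + of_nat j) (t - r))"
        by (simp only: a b)
      finally show ?thesis by (simp only: ac_simps)
    qed
  qed
  also have "\<dots> = \<alpha> * Q j (\<alpha> + of_nat j + \<beta>) t - \<beta> * Q j (\<alpha> + (\<beta> + of_nat j)) t"
    by (simp add: sum_distrib_left[symmetric] Q_vandermonde[OF j])
  also have "\<dots> = (\<alpha> - \<beta>) * Q j (\<alpha> + \<beta> + of_nat j) t"
    by (simp add: algebra_simps)
  finally show ?thesis .
qed

lemma fib_add: "fib (F + G) a = fib F a + fib G a"
  by (simp add: fib_def fun_eq_iff pw)
lemma fib_scale: "fib (tscale c F) a = tscale c (fib F a)"
  by (simp add: fib_def fun_eq_iff pw)
lemma fib_zero[simp]: "fib 0 a = 0"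
  by (simp add: fib_def fun_eq_iff pw)
lemma ymul_add: "ymul (F + G) = ymul F + ymul G"
  by (simp add: ymul_def fun_eq_iff pw split: list.splits)
lemma ymul_scale: "ymul (tscale c F) = tscale c (ymul F)"
  by (simp add: ymul_def fun_eq_iff pw split: list.splits)

lemma lop_add: "lop k psi L n (F + G) = lop k psi L n F + lop k psi L n G"
proof (induct L arbitrary: n F G)
  case 0 then show ?case by (simp add: fun_eq_iff algebra_simps pw)
next
  case (Suc L)
  show ?case
  proof (cases "n = k - Suc L")
    case True then show ?thesis by (simp add: ymul_add)
  next
    case False
    show ?thesis
    proof (rule ext)
      fix l show "lop k psi (Suc L) n (F + G) l = (lop k psi (Suc L) n F + lop k psi (Suc L) n G) l"
        using False by (cases l) (simp_all add: fib_add Suc sum.distrib algebra_simps pw)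
    qed
  qed
qed

lemma lop_scale: "lop k psi L n (tscale c F) = tscale c (lop k psi L n F)"
proof (induct L arbitrary: n F)
  case 0 then show ?case by (simp add: fun_eq_iff algebra_simps pw)
next
  case (Suc L)
  show ?case
  proof (cases "n = k - Suc L")
    case True then show ?thesis by (simp add: ymul_scale)
  next
    case False
    show ?thesis
    proof (rule ext)
      fix l show "lop k psi (Suc L) n (tscale c F) l = tscale c (lop k psi (Suc L) n F) l"
        using False by (cases l) (simp_all add: fib_scale Suc sum_distrib_left algebra_simps pw)
    qed
  qed
qed

lemma lop_zero[simp]: "lop k psi L n 0 = 0"
proof -
  have "lop k psi L n (tscale 0 0) = tscale 0 (lop k psi L n 0)" by (rule lop_scale)
  moreover have "tscale 0 (0::tens) = 0" "\<And>G::tens. tscale 0 G = 0" by (simp_all add: fun_eq_iff pw)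
  ultimately show ?thesis by simp
qed

lemma lop_sum: "lop k psi L n (\<Sum>s\<in>S. f s) = (\<Sum>s\<in>S. lop k psi L n (f s))"
  by (induct S rule: infinite_finite_induct) (simp_all add: lop_add)

lemma lop_Nil[simp]: "lop k psi (Suc L) n F [] = 0"
  by (simp add: ymul_def pw)

lemma lop_Cons: "n \<noteq> k - Suc L \<Longrightarrow> lop k psi (Suc L) n F (a # rest) =
   (\<Sum>s\<le>Suc (2*k). (cc (k - Suc L) n s * of_nat ((a+s) choose s))
            * lop k psi L (n + s*(k - Suc L)) (fib F (a+s)) rest)"
  by simp

lemma ymul_Cons: "ymul F (a # rest) = (if a = 0 then 0 else F ((a - 1) # rest))"
  by (simp add: ymul_def)

lemma fib_apply: "fib F a rest = F (a # rest)" by (simp add: fib_def)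

lemma fib_ymul: "fib (ymul F) t = (if t = 0 then 0 else fib F (t - 1))"
  by (simp add: fib_def ymul_def fun_eq_iff pw)

lemma cc_Suc: "j \<noteq> 0 \<Longrightarrow> cc j n (Suc s) = (of_nat n - of_nat j) * cc j (n + j) s"
  by (simp add: cc_def Q_Suc1)

lemma lop_if0: "lop k psi L p (if c then 0 else G) = (if c then 0 else lop k psi L p G)"
  by simp

context
  fixes k :: nat and psi :: "nat \<Rightarrow> complex"
  assumes char: "\<forall>m\<ge>k. \<forall>n\<ge>k. of_int (int m - int n) * psi (m + n) = 0"
begin

lemma psi_vanish: "N \<ge> 2*k+1 \<Longrightarrow> psi N = 0"
proof -
  assume N: "N \<ge> 2*k+1"
  have "of_int (int k - int (N - k)) * psi (k + (N - k)) = 0"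
    by (rule char[rule_format]) (use N in auto)
  moreover have "int k - int (N - k) \<noteq> 0" using N by auto
  then have "(of_int (int k - int (N - k)) :: complex) \<noteq> 0" by (metis of_int_eq_0_iff)
  moreover have "k + (N - k) = N" using N by auto
  ultimately show ?thesis by (metis mult_eq_0_iff)
qed

lemma lop_vanish: "L < k \<Longrightarrow> N \<ge> 2*k+1 \<Longrightarrow> lop k psi L N F = 0"
proof (induct L arbitrary: N F)
  case 0 then show ?case by (simp add: psi_vanish fun_eq_iff pw)
next
  case (Suc L)
  have N: "N \<noteq> k - Suc L" using Suc by auto
  show ?case
  proof (rule ext)
    fix l show "lop k psi (Suc L) N F l = 0 l"
    proof (cases l)
      case Nil then show ?thesis by (simp add: pw ymul_def)
    next
      case (Cons a rest)
      have "lop k psi L (N + s * (k - Suc L)) G = 0" for s G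
        using Suc by auto
      then show ?thesis using N Cons by (simp add: pw)
    qed
  qed
qed

lemma step_ymul:
  assumes L: "Suc L < k" and n: "n > k - Suc L"
  shows "lop k psi (Suc L) n (ymul F) = ymul (lop k psi (Suc L) n F)
     + tscale (of_nat n - of_nat (k - Suc L)) (lop k psi (Suc L) (n + (k - Suc L)) F)"
proof (rule ext)
  fix l
  let ?j = "k - Suc L"
  have j: "?j \<noteq> 0" using L by auto
  have nj: "n \<noteq> ?j" "n + ?j \<noteq> ?j" using n by auto
  let ?Z = "\<lambda>p t. lop k psi L p (fib F t) rest"
  show "lop k psi (Suc L) n (ymul F) l = (ymul (lop k psi (Suc L) n F)
     + tscale (of_nat n - of_nat ?j) (lop k psi (Suc L) (n + ?j) F)) l"
  proof (cases l)
    case Nil then show ?thesis by (simp add: pw ymul_def)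
  next
    case (Cons a rest)
    have "Suc (2 * k) * ?j \<ge> Suc (2 * k)" using j
      by (metis One_nat_def Suc_leI mult.right_neutral mult_le_mono2 neq0_conv)
    then have van: "lop k psi L (n + ?j + Suc (2 * k) * ?j) G = 0" for G
      using L by (intro lop_vanish) auto
    have R2: "lop k psi (Suc L) (n + ?j) F (a # rest) =
       (\<Sum>s\<le>2*k. (cc ?j (n + ?j) s * of_nat ((a+s) choose s))
            * lop k psi L (n + ?j + s * ?j) (fib F (a+s)) rest)"
    proof -
      have "lop k psi (Suc L) (n + ?j) F (a # rest) =
       (\<Sum>s\<le>Suc (2*k). (cc ?j (n + ?j) s * of_nat ((a+s) choose s))
            * lop k psi L (n + ?j + s * ?j) (fib F (a+s)) rest)"
        using lop_Cons[OF nj(2)] by simp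
      also have "\<dots> = (\<Sum>s\<le>2*k. (cc ?j (n + ?j) s * of_nat ((a+s) choose s))
            * lop k psi L (n + ?j + s * ?j) (fib F (a+s)) rest)
         + (cc ?j (n + ?j) (Suc (2*k)) * of_nat ((a+Suc (2*k)) choose (Suc (2*k))))
            * lop k psi L (n + ?j + Suc (2*k) * ?j) (fib F (a+Suc (2*k))) rest"
        by (rule sum.atMost_Suc)
      also have "\<dots> = (\<Sum>s\<le>2*k. (cc ?j (n + ?j) s * of_nat ((a+s) choose s))
            * lop k psi L (n + ?j + s * ?j) (fib F (a+s)) rest)"
        by (simp only: van zero_fun_apply mult_zero_right add_0_right)
      finally show ?thesis .
    qed
    have shiftterm: "(\<Sum>s\<le>2*k. (cc ?j n (Suc s) * of_nat (f s))
            * lop k psi L (n + Suc s * ?j) (g s) rest)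
         = (of_nat n - of_nat ?j) * (\<Sum>s\<le>2*k. (cc ?j (n + ?j) s * of_nat (f s))
            * lop k psi L (n + ?j + s * ?j) (g s) rest)" for f g
    proof -
      have idx: "n + Suc s * ?j = n + ?j + s * ?j" for s by simp
      show ?thesis unfolding idx cc_Suc[OF j] sum_distrib_left
        by (intro sum.cong refl) (simp add: ac_simps)
    qed
    show ?thesis
    proof (cases a)
      case 0
      have "lop k psi (Suc L) n (ymul F) l =
         (\<Sum>s\<le>Suc (2*k). (cc ?j n s * of_nat ((0+s) choose s))
            * lop k psi L (n + s * ?j) (fib (ymul F) (0+s)) rest)"
        using nj Cons 0 by simp
      also have "\<dots> = (\<Sum>s\<le>2*k. (cc ?j n (Suc s) * of_nat ((Suc s) choose (Suc s)))
            * lop k psi L (n + Suc s * ?j) (fib F s) rest)"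
        by (subst sum.atMost_Suc_shift) (simp add: fib_ymul zero_fun_apply)
      also have "\<dots> = (of_nat n - of_nat ?j) * (\<Sum>s\<le>2*k. (cc ?j (n + ?j) s * of_nat (Suc s choose Suc s))
            * lop k psi L (n + ?j + s * ?j) (fib F s) rest)"
        by (rule shiftterm)
      also have "\<dots> = (of_nat n - of_nat ?j) * lop k psi (Suc L) (n + ?j) F (a # rest)"
        unfolding R2 using 0 by simp
      finally show ?thesis using Cons 0 by (simp add: pw ymul_def)
    next
      case (Suc b)
      have pas: "(Suc b + s) choose s = ((b + s) choose s) + (if s = 0 then 0 else (b + s) choose (s - 1))" for s
        by (cases s) simp_all
      have "lop k psi (Suc L) n (ymul F) l =
         (\<Sum>s\<le>Suc (2*k). (cc ?j n s * of_nat ((Suc b+s) choose s))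
            * lop k psi L (n + s * ?j) (fib F (b+s)) rest)"
        using nj Cons Suc by (simp add: fib_ymul)
      also have "\<dots> = (\<Sum>s\<le>Suc (2*k). (cc ?j n s * of_nat ((b+s) choose s))
            * lop k psi L (n + s * ?j) (fib F (b+s)) rest)
          + (\<Sum>s\<le>Suc (2*k). (cc ?j n s * of_nat (if s = 0 then 0 else (b + s) choose (s - 1)))
            * lop k psi L (n + s * ?j) (fib F (b+s)) rest)"
        unfolding sum.distrib[symmetric]
        by (rule sum.cong[OF refl]) (simp only: pas of_nat_add distrib_left distrib_right)
      also have "(\<Sum>s\<le>Suc (2*k). (cc ?j n s * of_nat (if s = 0 then 0 else (b + s) choose (s - 1)))
            * lop k psi L (n + s * ?j) (fib F (b+s)) rest)
          = (\<Sum>s\<le>2*k. (cc ?j n (Suc s) * of_nat ((Suc b + s) choose s))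
            * lop k psi L (n + Suc s * ?j) (fib F (Suc b+s)) rest)"
        by (subst sum.atMost_Suc_shift) simp
      also have "\<dots> = (of_nat n - of_nat ?j) * (\<Sum>s\<le>2*k. (cc ?j (n + ?j) s * of_nat ((Suc b + s) choose s))
            * lop k psi L (n + ?j + s * ?j) (fib F (Suc b + s)) rest)"
        by (rule shiftterm)
      also have "\<dots> = (of_nat n - of_nat ?j) * lop k psi (Suc L) (n + ?j) F (a # rest)"
        unfolding R2 using Suc by simp
      finally show ?thesis using Cons Suc nj by (simp add: pw ymul_def)
    qed
  qed
qed


lemma fib_lop: assumes n: "n \<noteq> k - Suc L" shows "fib (lop k psi (Suc L) n F) b =
  (\<Sum>s\<le>Suc (2*k). tscale (cc (k - Suc L) n s * of_nat ((b+s) choose s))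
      (lop k psi L (n + s*(k - Suc L)) (fib F (b+s))))"
  by (rule ext) (simp only: fib_apply lop_Cons[OF n] sum_fun_apply tscale_apply)

lemma expand2:
  assumes "m \<noteq> k - Suc L" "n \<noteq> k - Suc L"
  shows "lop k psi (Suc L) m (lop k psi (Suc L) n F) (a # rest) =
    (\<Sum>r\<le>Suc (2*k). \<Sum>s\<le>Suc (2*k). (cc (k - Suc L) m r * cc (k - Suc L) n s
       * of_nat (((a+r) choose r) * ((a+r+s) choose s)))
       * lop k psi L (m + r*(k - Suc L)) (lop k psi L (n + s*(k - Suc L)) (fib F (a+r+s))) rest)"
  unfolding lop_Cons[OF assms(1)] fib_lop[OF assms(2)] lop_sum lop_scale sum_fun_apply tscale_apply
     sum_distrib_left
  by (intro sum.cong refl) (simp add: ac_simps)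

lemma choose3: "((a+r) choose r) * ((a+r+s) choose s) = ((a+r+s) choose (r+s)) * ((r+s) choose s)"
  using choose_mult_lemma[of r a s] by (simp add: ac_simps)

lemma double_to_triangle:
  fixes h :: "nat \<Rightarrow> nat \<Rightarrow> 'a::comm_monoid_add"
  assumes "\<And>r s. r + s > B \<Longrightarrow> h r s = 0"
  shows "(\<Sum>r\<le>B. \<Sum>s\<le>B. h r s) = (\<Sum>t\<le>B. \<Sum>r\<le>t. h r (t - r))"
proof -
  have "(\<Sum>r\<le>B. \<Sum>s\<le>B. h r s) = (\<Sum>(r,s)\<in>{..B}\<times>{..B}. h r s)"
    by (simp add: sum.cartesian_product)
  also have "\<dots> = (\<Sum>(r,s)\<in>{(r,s). r+s \<le> B}. h r s)"
  proof (rule sum.mono_neutral_right)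
    show "\<forall>i\<in>{..B} \<times> {..B} - {(r, s). r + s \<le> B}. (case i of (r, s) \<Rightarrow> h r s) = 0"
    proof
      fix i assume "i \<in> {..B} \<times> {..B} - {(r, s). r + s \<le> B}"
      then obtain r s where "i = (r, s)" "B < r + s" by auto
      then show "(case i of (r, s) \<Rightarrow> h r s) = 0" using assms by simp
    qed
  qed auto
  also have "\<dots> = (\<Sum>t\<le>B. \<Sum>r\<le>t. h r (t - r))"
    by (rule sum.triangle_reindex_eq)
  finally show ?thesis .
qed


lemma Xsym: "((a+s) choose s) * ((a+s+r) choose r) = ((a+r) choose r) * ((a+r+s) choose s)"
proof -
  have "((r+s) choose s) = ((r+s) choose r)" "((s+r) choose r) = ((r+s) choose r)"
    using binomial_symmetric[of s "r+s"] by (simp_all add: add.commute)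
  then show ?thesis using choose3[of a s r] choose3[of a r s] by (simp add: ac_simps)
qed

lemma Xtri: "r \<le> t \<Longrightarrow> ((a+r) choose r) * ((a+r+(t-r)) choose (t-r)) = ((a+t) choose t) * (t choose r)"
proof -
  assume rt: "r \<le> t"
  have "((a+r) choose r) * ((a+r+(t-r)) choose (t-r)) = ((a+r+(t-r)) choose (r+(t-r))) * ((r+(t-r)) choose (t-r))"
    by (rule choose3)
  also have "\<dots> = ((a+t) choose t) * (t choose (t-r))" using rt by simp
  also have "t choose (t-r) = t choose r" using binomial_symmetric[OF rt] by simp
  finally show ?thesis .
qed

lemma cc_identity: "j \<noteq> 0 \<Longrightarrow>
  (\<Sum>r\<le>t. of_nat (t choose r) * cc j m r * cc j n (t-r) * of_int (int (m + r*j) - int (n + (t-r)*j)))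
   = of_int (int m - int n) * cc j (m+n) t"
proof -
  assume j: "j \<noteq> 0"
  let ?a = "of_nat m - of_nat j :: complex" and ?b = "of_nat n - of_nat j :: complex"
  have f: "(of_int (int (m + r*j) - int (n + (t-r)*j)) :: complex)
     = (?a + of_nat r * of_nat j) - (?b + of_nat (t - r) * of_nat j)" for r
    by simp
  have "(\<Sum>r\<le>t. of_nat (t choose r) * cc j m r * cc j n (t-r) * of_int (int (m + r*j) - int (n + (t-r)*j)))
     = (\<Sum>r\<le>t. of_nat (t choose r) * Q j ?a r * Q j ?b (t - r)
      * ((?a + of_nat r * of_nat j) - (?b + of_nat (t - r) * of_nat j)))"
    unfolding cc_def f by simp
  also have "\<dots> = (?a - ?b) * Q j (?a + ?b + of_nat j) t" by (rule Q_identity[OF j])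
  also have "?a + ?b + of_nat j = of_nat (m + n) - of_nat j" by simp
  also have "?a - ?b = of_int (int m - int n)" by simp
  finally show ?thesis unfolding cc_def .
qed

lemma step_main:
  assumes L: "Suc L < k" and m: "m > k - Suc L" and n: "n > k - Suc L"
    and IH: "\<And>p q G. p \<ge> k - L \<Longrightarrow> q \<ge> k - L \<Longrightarrow>
       lop k psi L p (lop k psi L q G) - lop k psi L q (lop k psi L p G)
         = tscale (of_int (int p - int q)) (lop k psi L (p+q) G)"
  shows "lop k psi (Suc L) m (lop k psi (Suc L) n F) - lop k psi (Suc L) n (lop k psi (Suc L) m F)
     = tscale (of_int (int m - int n)) (lop k psi (Suc L) (m+n) F)"
proof (rule ext)
  fix l
  let ?j = "k - Suc L"
  let ?B = "Suc (2*k)"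
  have j: "?j \<noteq> 0" using L by auto
  have mj: "m \<noteq> ?j" "n \<noteq> ?j" "m + n \<noteq> ?j" using m n by auto
  show "(lop k psi (Suc L) m (lop k psi (Suc L) n F) - lop k psi (Suc L) n (lop k psi (Suc L) m F)) l
     = tscale (of_int (int m - int n)) (lop k psi (Suc L) (m+n) F) l"
  proof (cases l)
    case Nil then show ?thesis by (simp only: minus_apply tscale_apply lop_Nil mult_zero_right diff_self)
  next
    case (Cons a rest)
    let ?V = "\<lambda>p t. lop k psi L p (fib F t) rest"
    let ?X = "\<lambda>r s. of_nat (((a+r) choose r) * ((a+r+s) choose s)) :: complex"
    let ?W = "\<lambda>p q t. lop k psi L p (lop k psi L q (fib F t)) rest"
    have E1: "lop k psi (Suc L) m (lop k psi (Suc L) n F) (a # rest) =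
       (\<Sum>r\<le>?B. \<Sum>s\<le>?B. (cc ?j m r * cc ?j n s * ?X r s) * ?W (m + r*?j) (n + s*?j) (a+r+s))"
      by (rule expand2[OF mj(1) mj(2)])
    have E2: "lop k psi (Suc L) n (lop k psi (Suc L) m F) (a # rest) =
       (\<Sum>r\<le>?B. \<Sum>s\<le>?B. (cc ?j m r * cc ?j n s * ?X r s) * ?W (n + s*?j) (m + r*?j) (a+r+s))"
    proof -
      have "lop k psi (Suc L) n (lop k psi (Suc L) m F) (a # rest) =
        (\<Sum>s\<le>?B. \<Sum>r\<le>?B. (cc ?j n s * cc ?j m r * ?X s r) * ?W (n + s*?j) (m + r*?j) (a+s+r))"
        by (rule expand2[OF mj(2) mj(1)])
      also have "\<dots> = (\<Sum>r\<le>?B. \<Sum>s\<le>?B. (cc ?j n s * cc ?j m r * ?X s r) * ?W (n + s*?j) (m + r*?j) (a+s+r))"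
        by (rule sum.swap)
      also have "\<dots> = (\<Sum>r\<le>?B. \<Sum>s\<le>?B. (cc ?j m r * cc ?j n s * ?X r s) * ?W (n + s*?j) (m + r*?j) (a+r+s))"
      proof (intro sum.cong refl)
        fix r s
        have xs: "?X s r = ?X r s" by (simp only: Xsym)
        have ix: "a + s + r = a + r + s" by simp
        show "(cc ?j n s * cc ?j m r * ?X s r) * ?W (n + s*?j) (m + r*?j) (a+s+r)
          = (cc ?j m r * cc ?j n s * ?X r s) * ?W (n + s*?j) (m + r*?j) (a+r+s)"
          unfolding xs unfolding ix by (simp only: ac_simps)
      qed
      finally show ?thesis .
    qed
    have IHp: "?W p q t - ?W q p t = of_int (int p - int q) * ?V (p+q) t"
      if "p \<ge> k - L" "q \<ge> k - L" for p q t
      using fun_cong[OF IH[OF that, of "fib F t"], of rest] by (simp add: pw)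
    let ?h = "\<lambda>r s. (cc ?j m r * cc ?j n s * ?X r s) *
        (of_int (int (m + r*?j) - int (n + s*?j)) * ?V (m + n + (r+s)*?j) (a+r+s))"
    have "(lop k psi (Suc L) m (lop k psi (Suc L) n F) - lop k psi (Suc L) n (lop k psi (Suc L) m F)) (a # rest)
       = (\<Sum>r\<le>?B. \<Sum>s\<le>?B. ?h r s)"
    proof -
      have "(lop k psi (Suc L) m (lop k psi (Suc L) n F) - lop k psi (Suc L) n (lop k psi (Suc L) m F)) (a # rest)
        = (\<Sum>r\<le>?B. \<Sum>s\<le>?B. (cc ?j m r * cc ?j n s * ?X r s) *
             (?W (m + r*?j) (n + s*?j) (a+r+s) - ?W (n + s*?j) (m + r*?j) (a+r+s)))"
        unfolding minus_apply E1 E2 sum_subtractf[symmetric] right_diff_distrib ..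
      also have "\<dots> = (\<Sum>r\<le>?B. \<Sum>s\<le>?B. ?h r s)"
      proof (intro sum.cong refl)
        fix r s
        have "m + r * ?j \<ge> k - L" "n + s * ?j \<ge> k - L" using m n by auto
        note e = IHp[OF this, of "a+r+s"]
        have idx: "(m + r*?j) + (n + s*?j) = m + n + (r+s)*?j" by (simp add: add_mult_distrib)
        show "(cc ?j m r * cc ?j n s * ?X r s) *
             (?W (m + r*?j) (n + s*?j) (a+r+s) - ?W (n + s*?j) (m + r*?j) (a+r+s)) = ?h r s"
          by (simp only: e idx)
      qed
      finally show ?thesis .
    qed
    also have "\<dots> = (\<Sum>t\<le>?B. \<Sum>r\<le>t. ?h r (t - r))"
    proof (rule double_to_triangle)
      fix r s assume rs: "?B < r + s"
      have ge: "(r + s) * ?j \<ge> r + s" using j by (metis One_nat_def Suc_leI mult.right_neutral mult_le_mono2 neq0_conv)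
      have z: "lop k psi L (m + n + (r+s)*?j) (fib F (a+r+s)) = 0"
        by (rule lop_vanish) (use L in simp, use rs ge in linarith)
      then have "?V (m + n + (r+s)*?j) (a+r+s) = 0"
        by (simp only: z zero_fun_apply)
      then show "?h r s = 0" by simp
    qed
    also have "\<dots> = (\<Sum>t\<le>?B. of_int (int m - int n) * ((cc ?j (m+n) t * of_nat ((a+t) choose t))
             * lop k psi L (m + n + t * ?j) (fib F (a+t)) rest))"
    proof (rule sum.cong[OF refl])
      fix t assume "t \<in> {..?B}"
      have "(\<Sum>r\<le>t. ?h r (t - r)) = (\<Sum>r\<le>t. (of_nat ((a+t) choose t) * ?V (m + n + t*?j) (a + t)) *
           (of_nat (t choose r) * cc ?j m r * cc ?j n (t-r) * of_int (int (m + r*?j) - int (n + (t-r)*?j))))"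
      proof (rule sum.cong[OF refl])
        fix r assume "r \<in> {..t}"
        then have rt: "r \<le> t" by simp
        then have e1: "r + (t - r) = t" "a + r + (t - r) = a + t" by auto
        have e2: "?X r (t - r) = of_nat ((a+t) choose t) * of_nat (t choose r)"
          using Xtri[OF rt, of a] by (simp only: of_nat_mult)
        show "?h r (t - r) = (of_nat ((a+t) choose t) * ?V (m + n + t*?j) (a + t)) *
           (of_nat (t choose r) * cc ?j m r * cc ?j n (t-r) * of_int (int (m + r*?j) - int (n + (t-r)*?j)))"
          unfolding e2 unfolding e1 by (simp only: ac_simps)
      qed
      also have "\<dots> = (of_nat ((a+t) choose t) * ?V (m + n + t*?j) (a + t)) *
          (of_int (int m - int n) * cc ?j (m+n) t)"
        by (simp only: sum_distrib_left[symmetric] cc_identity[OF j])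
      finally show "(\<Sum>r\<le>t. ?h r (t - r)) = of_int (int m - int n) * ((cc ?j (m+n) t * of_nat ((a+t) choose t))
             * lop k psi L (m + n + t * ?j) (fib F (a+t)) rest)"
        by (simp only: ac_simps)
    qed
    also have "\<dots> = tscale (of_int (int m - int n)) (lop k psi (Suc L) (m+n) F) (a # rest)"
      unfolding tscale_apply lop_Cons[OF mj(3)] sum_distrib_left ..
    finally show ?thesis using Cons by simp
  qed
qed


lemma lop_j: "lop k psi (Suc L) (k - Suc L) F = ymul F" by simp

lemma lop_rel: "L < k \<Longrightarrow> k - L \<le> m \<Longrightarrow> k - L \<le> n \<Longrightarrow>
  lop k psi L m (lop k psi L n F) - lop k psi L n (lop k psi L m F)
    = tscale (of_int (int m - int n)) (lop k psi L (m+n) F)"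
proof (induct L arbitrary: m n F)
  case 0
  have c: "of_int (int m - int n) * psi (m+n) = 0" using char 0 by auto
  show ?case
  proof (rule ext)
    fix x
    have "tscale (of_int (int m - int n)) (lop k psi 0 (m+n) F) x = (of_int (int m - int n) * psi (m+n)) * F x"
      by (simp add: pw)
    then show "(lop k psi 0 m (lop k psi 0 n F) - lop k psi 0 n (lop k psi 0 m F)) x
      = tscale (of_int (int m - int n)) (lop k psi 0 (m+n) F) x"
      unfolding c by (simp add: pw)
  qed
next
  case (Suc L)
  let ?j = "k - Suc L"
  have IH: "\<And>p q G. p \<ge> k - L \<Longrightarrow> q \<ge> k - L \<Longrightarrow>
       lop k psi L p (lop k psi L q G) - lop k psi L q (lop k psi L p G)
         = tscale (of_int (int p - int q)) (lop k psi L (p+q) G)"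
    using Suc by auto
  show ?case
  proof (cases "m = n")
    case True then show ?thesis by (simp add: fun_eq_iff pw)
  next
    case mn: False
    show ?thesis
    proof (cases "m = ?j")
      case True
      then have n: "n > ?j" using mn Suc by auto
      show ?thesis
        unfolding True lop_j step_ymul[OF Suc(2) n]
        by (rule ext) (simp add: pw algebra_simps)
    next
      case m: False
      show ?thesis
      proof (cases "n = ?j")
        case True
        then have m': "m > ?j" using m Suc by auto
        show ?thesis
          unfolding True lop_j step_ymul[OF Suc(2) m']
          by (rule ext) (simp add: pw algebra_simps)
      next
        case False
        then have "m > ?j" "n > ?j" using m Suc by auto
        then show ?thesis using step_main[OF Suc(2) _ _ IH] by blast
      qed
    qed
  qed
qed


definition mscale :: "complex \<Rightarrow> (nat \<Rightarrow> tens) \<Rightarrow> (nat \<Rightarrow> tens)" where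
  "mscale c X = (\<lambda>x. tscale c (X x))"

definition Dop :: "nat \<Rightarrow> (nat \<Rightarrow> tens) \<Rightarrow> (nat \<Rightarrow> tens)" where
  "Dop n X = (if n = 0 then (\<lambda>x. tscale (of_nat x) (X x)) else (\<lambda>x. lop k psi (k - 1) n (X (x + n))))"

lemma Dop_add: "Dop n (X + Y) = Dop n X + Dop n Y"
  by (simp add: Dop_def fun_eq_iff lop_add pw algebra_simps)
lemma Dop_scale: "Dop n (mscale c X) = mscale c (Dop n X)"
  by (simp add: Dop_def mscale_def fun_eq_iff lop_scale pw algebra_simps)
lemma Dop_zero: "Dop n 0 = 0"
  by (simp add: Dop_def fun_eq_iff pw)
lemma Dop_diff: "Dop n (X - Y) = Dop n X - Dop n Y"
proof -
  have "Dop n X = Dop n (X - Y) + Dop n Y" using Dop_add[of n "X - Y" Y] by simp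
  then show ?thesis by (simp add: eq_diff_eq)
qed

lemma Dop_rel:
  assumes k1: "k \<ge> 1"
  shows "Dop m (Dop n X) - Dop n (Dop m X) = mscale (of_int (int m - int n)) (Dop (m+n) X)"
proof (cases "m = n")
  case True then show ?thesis by (simp add: mscale_def fun_eq_iff pw)
next
  case mn: False
  show ?thesis
  proof (cases "m = 0")
    case True
    then have n: "n \<noteq> 0" using mn by auto
    show ?thesis using True n
      by (simp add: Dop_def mscale_def fun_eq_iff lop_scale pw del: of_nat_add) (simp add: algebra_simps)
  next
    case m: False
    show ?thesis
    proof (cases "n = 0")
      case True
      show ?thesis using True m
        by (simp add: Dop_def mscale_def fun_eq_iff lop_scale pw del: of_nat_add) (simp add: algebra_simps)
    next
      case n: False
      have kk: "k - 1 < k" "k - (k - 1) \<le> m" "k - (k - 1) \<le> n" using k1 m n by auto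
      show ?thesis
      proof (rule ext)
        fix x
        have e: "x + n + m = x + m + n" by simp
        have "(Dop m (Dop n X) - Dop n (Dop m X)) x
           = lop k psi (k-1) m (lop k psi (k-1) n (X (x + m + n))) - lop k psi (k-1) n (lop k psi (k-1) m (X (x + m + n)))"
          using m n by (simp add: Dop_def e minus_apply)
        also have "\<dots> = tscale (of_int (int m - int n)) (lop k psi (k-1) (m+n) (X (x + m + n)))"
          by (rule lop_rel[OF kk])
        also have "\<dots> = mscale (of_int (int m - int n)) (Dop (m+n) X) x"
          using m n by (simp add: Dop_def mscale_def add.assoc)
        finally show "(Dop m (Dop n X) - Dop n (Dop m X)) x = mscale (of_int (int m - int n)) (Dop (m+n) X) x" .
      qed
    qed
  qed
qed

definition vec :: "nat \<Rightarrow> tens" where "vec L = word (replicate L 0)"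

lemma cc_0[simp]: "cc j n 0 = 1" by (simp add: cc_def Q_def)

lemma fib_word: "fib (word (b # z)) a = (if a = b then word z else 0)"
  by (auto simp: fib_def word_def fun_eq_iff pw)

lemma vec_whit: "L < k \<Longrightarrow> n \<ge> k \<Longrightarrow> lop k psi L n (vec L) = tscale (psi n) (vec L)"
proof (induct L)
  case 0 then show ?case by simp
next
  case (Suc L)
  have n: "n \<noteq> k - Suc L" using Suc by auto
  show ?case
  proof (rule ext)
    fix l
    show "lop k psi (Suc L) n (vec (Suc L)) l = tscale (psi n) (vec (Suc L)) l"
    proof (cases l)
      case Nil then show ?thesis by (simp add: vec_def word_def pw ymul_def)
    next
      case (Cons a rest)
      have v: "vec (Suc L) = word (0 # replicate L 0)" by (simp add: vec_def)
      have "lop k psi (Suc L) n (vec (Suc L)) l =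
         (\<Sum>s\<le>Suc (2*k). (cc (k - Suc L) n s * of_nat ((a+s) choose s))
            * lop k psi L (n + s*(k - Suc L)) (fib (vec (Suc L)) (a+s)) rest)"
        using Cons lop_Cons[OF n] by simp
      also have "\<dots> = (cc (k - Suc L) n 0 * of_nat ((a+0) choose 0))
            * lop k psi L (n + 0*(k - Suc L)) (fib (vec (Suc L)) (a+0)) rest"
        by (subst sum.atMost_Suc_shift) (simp add: v fib_word pw)
      also have "\<dots> = tscale (psi n) (vec (Suc L)) l"
      proof -
        have IH: "lop k psi L n (word (replicate L 0)) = tscale (psi n) (word (replicate L 0))"
          using Suc by (simp add: vec_def)
        show ?thesis using Cons
          by (cases "a = 0") (simp_all add: v fib_word IH pw word_apply)
      qed
      finally show ?thesis .
    qed
  qed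
qed

definition vtop :: "nat \<Rightarrow> tens" where "vtop = (\<lambda>x. vec (k - 1))"

lemma vtop_whit: "k \<ge> 1 \<Longrightarrow> n \<ge> k \<Longrightarrow> Dop n vtop = mscale (psi n) vtop"
  by (simp add: Dop_def vtop_def mscale_def vec_whit)

lemma vtop_ne: "vtop \<noteq> 0"
proof
  assume "vtop = 0"
  then have "vtop 0 (replicate (k-1) 0) = 0" by (simp add: pw)
  then show False by (simp add: vtop_def vec_def word_def)
qed

primrec opw :: "nat list \<Rightarrow> (nat \<Rightarrow> tens) \<Rightarrow> (nat \<Rightarrow> tens)" where
  "opw [] X = X"
| "opw (i # a) X = Dop i (opw a X)"

lemma opw_append: "opw (a @ b) X = opw a (opw b X)" by (induct a) auto
lemma opw_add: "opw a (X + Y) = opw a X + opw a Y" by (induct a) (auto simp: Dop_add)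
lemma opw_scale: "opw a (mscale c X) = mscale c (opw a X)" by (induct a) (auto simp: Dop_scale)
lemma opw_zero: "opw a 0 = 0" by (induct a) (auto simp: Dop_zero)
lemma opw_diff: "opw a (X - Y) = opw a X - opw a Y" by (induct a) (auto simp: Dop_diff)

definition Psi :: "tens \<Rightarrow> (nat \<Rightarrow> tens)" where
  "Psi f = (\<Sum>a | f a \<noteq> 0. mscale (f a) (opw a vtop))"

lemma mscale_0[simp]: "mscale 0 X = 0" by (simp add: mscale_def fun_eq_iff pw)

lemma Psi_eq: "f \<in> Tens \<Longrightarrow> finite A \<Longrightarrow> {a. f a \<noteq> 0} \<subseteq> A \<Longrightarrow>
   Psi f = (\<Sum>a\<in>A. mscale (f a) (opw a vtop))"
  unfolding Psi_def by (rule sum.mono_neutral_left) auto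

lemma Psi_add: "f \<in> Tens \<Longrightarrow> g \<in> Tens \<Longrightarrow> Psi (tscale c f + g) = mscale c (Psi f) + Psi g"
proof -
  assume f: "f \<in> Tens" and g: "g \<in> Tens"
  let ?A = "{a. f a \<noteq> 0} \<union> {a. g a \<noteq> 0}"
  have A: "finite ?A" using f g by (simp add: Tens_def)
  have "Psi (tscale c f + g) = (\<Sum>a\<in>?A. mscale ((tscale c f + g) a) (opw a vtop))"
    by (rule Psi_eq) (use f g A in \<open>auto simp: pw\<close>)
  also have "\<dots> = mscale c (\<Sum>a\<in>?A. mscale (f a) (opw a vtop)) + (\<Sum>a\<in>?A. mscale (g a) (opw a vtop))"
    by (simp add: mscale_def fun_eq_iff pw sum_fun_apply sum.distrib sum_distrib_left algebra_simps)
  also have "\<dots> = mscale c (Psi f) + Psi g"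
    using Psi_eq[OF f A] Psi_eq[OF g A] by auto
  finally show ?thesis .
qed

lemma Psi_word: "Psi (word w) = opw w vtop"
proof -
  have "Psi (word w) = (\<Sum>a\<in>{w}. mscale (word w a) (opw a vtop))"
    by (rule Psi_eq) (auto simp: word_apply)
  then show ?thesis by (simp add: word_def mscale_def fun_eq_iff pw)
qed

lemma Psi_sub: "f \<in> Tens \<Longrightarrow> g \<in> Tens \<Longrightarrow> Psi (f - g) = Psi f - Psi g"
proof -
  assume f: "f \<in> Tens" and g: "g \<in> Tens"
  have "Psi (tscale (-1) g + f) = mscale (-1) (Psi g) + Psi f"
    by (rule Psi_add[OF g f])
  moreover have "tscale (-1) g + f = f - g" by (simp add: fun_eq_iff pw)
  moreover have "mscale (-1) (Psi g) + Psi f = Psi f - Psi g" by (simp add: mscale_def fun_eq_iff pw)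
  ultimately show ?thesis by simp
qed

lemma Psi_scale: "f \<in> Tens \<Longrightarrow> Psi (tscale c f) = mscale c (Psi f)"
proof -
  assume f: "f \<in> Tens"
  have "Psi (tscale c f + 0) = mscale c (Psi f) + Psi 0" by (rule Psi_add[OF f Tens_zero])
  moreover have "Psi 0 = 0" by (simp add: Psi_def pw)
  ultimately show ?thesis by simp
qed

lemma Psi_J:
  assumes k1: "k \<ge> 1"
  shows "f \<in> Jrel k psi \<Longrightarrow> Psi f = 0"
proof -
  assume "f \<in> Jrel k psi"
  then have "f \<in> Tens \<and> Psi f = 0" unfolding Jrel_def
  proof (induct rule: T.span_induct_alt)
    case base then show ?case by (simp add: Psi_def pw Tens_def)
  next
    case (step c x y)
    have xT: "x \<in> Tens" using step(1) gens_Tens by blast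
    have "Psi x = 0" using step(1)
    proof
      assume "x \<in> lie_rels"
      then obtain a b i j where x: "x = word (a @ [i, j] @ b) - word (a @ [j, i] @ b)
               - tscale (of_int (int i - int j)) (word (a @ [i + j] @ b))"
        unfolding lie_rels_def by blast
      have "Psi x = opw a (Dop i (Dop j (opw b vtop)) - Dop j (Dop i (opw b vtop))
             - mscale (of_int (int i - int j)) (Dop (i+j) (opw b vtop)))"
        unfolding x by (simp add: Psi_sub Tens_diff Tens_scale Psi_scale Psi_word opw_append opw_diff opw_scale)
      also have "\<dots> = 0" by (simp add: Dop_rel[OF k1] opw_zero)
      finally show ?thesis .
    next
      assume "x \<in> whit_rels k psi"
      then obtain a i where i: "k \<le> i" and x: "x = word (a @ [i]) - tscale (psi i) (word a)"
        unfolding whit_rels_def by blast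
      have "Psi x = opw a (Dop i vtop - mscale (psi i) vtop)"
        unfolding x by (simp add: Psi_sub Tens_scale Psi_scale Psi_word opw_append opw_diff opw_scale)
      also have "\<dots> = 0" by (simp add: vtop_whit[OF k1 i] opw_zero)
      finally show ?thesis .
    qed
    note px = this
    have y: "y \<in> Tens" "Psi y = 0" using step(2) by auto
    have "tscale c x + y \<in> Tens" by (intro Tens_add Tens_scale xT y)
    moreover have "Psi (tscale c x + y) = 0"
      unfolding Psi_add[OF xT y(1)] px y(2) by (simp add: mscale_def fun_eq_iff pw)
    ultimately show ?case by blast
  qed
  then show ?thesis by simp
qed

lemma J_ne_Tens: "k \<ge> 1 \<Longrightarrow> Jrel k psi \<noteq> Tens"
proof
  assume k1: "k \<ge> 1" and e: "Jrel k psi = Tens"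
  have "Psi (word []) = 0" using Psi_J[OF k1] e by simp
  then show False using vtop_ne by (simp add: Psi_word)
qed

end


context
  fixes k :: nat and phi :: "nat \<Rightarrow> complex"
  assumes char: "\<forall>m\<ge>k. \<forall>n\<ge>k. of_int (int m - int n) * phi (m + n) = 0"
begin

lemma only_if_part:
  assumes k1: "k \<ge> 1" and nz: "\<exists>i\<ge>k. phi i \<noteq> 0"
    and irr: "quasi_whittaker_irreducible k phi"
  shows "phi (2 * k - 1) \<noteq> 0 \<or> phi (2 * k) \<noteq> 0"
proof (rule ccontr)
  assume "\<not> (phi (2 * k - 1) \<noteq> 0 \<or> phi (2 * k) \<noteq> 0)"
  then have z1: "phi (2*k - 1) = 0" and z2: "phi (2*k) = 0" by auto
  have van: "phi N = 0" if "N \<ge> 2*k+1" for N using psi_vanish[OF char that] .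
  have k2: "k \<ge> 2"
  proof (rule ccontr)
    assume "\<not> k \<ge> 2"
    then have k: "k = 1" using k1 by auto
    obtain i where i: "i \<ge> k" "phi i \<noteq> 0" using nz by auto
    have "i = 1 \<or> i = 2 \<or> i \<ge> 2*k+1" using i k by auto
    then show False using i z1 z2 van k by auto
  qed
  define phi' where "phi' c = phi(k - 1 := c)" for c
  have char': "\<forall>m\<ge>k-1. \<forall>n\<ge>k-1. of_int (int m - int n) * phi' c (m + n) = 0" for c
  proof (intro allI impI)
    fix m n assume m: "m \<ge> k - 1" and n: "n \<ge> k - 1"
    show "of_int (int m - int n) * phi' c (m + n) = 0"
    proof (cases "m = n")
      case True then show ?thesis by simp
    next
      case False
      then have "m + n \<ge> 2*k - 1" using m n k2 by auto
      then have "m + n = 2*k - 1 \<or> m + n = 2*k \<or> m + n \<ge> 2*k+1" by auto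
      moreover have "m + n \<noteq> k - 1" using \<open>m + n \<ge> 2*k - 1\<close> k2 by auto
      ultimately have "phi' c (m + n) = 0" using z1 z2 van by (auto simp: phi'_def)
      then show ?thesis by simp
    qed
  qed
  define S where "S c = Jrel (k - 1) (phi' c)" for c
  have sub: "Jrel k phi \<subseteq> S c" for c
    unfolding S_def Jrel_def
  proof (rule T.span_mono)
    show "lie_rels \<union> whit_rels k phi \<subseteq> lie_rels \<union> whit_rels (k - 1) (phi' c)"
    proof
      fix x assume "x \<in> lie_rels \<union> whit_rels k phi"
      then show "x \<in> lie_rels \<union> whit_rels (k - 1) (phi' c)"
      proof
        assume "x \<in> whit_rels k phi"
        then obtain a i where i: "k \<le> i" and x: "x = word (a @ [i]) - tscale (phi i) (word a)"
          unfolding whit_rels_def by blast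
        have "i \<noteq> k - 1" using i k2 by auto
        then have "phi' c i = phi i" by (simp add: phi'_def)
        then have "x = word (a @ [i]) - tscale (phi' c i) (word a)" using x by simp
        moreover have "k - 1 \<le> i" using i by simp
        ultimately show ?thesis unfolding whit_rels_def by blast
      qed simp
    qed
  qed
  have props: "T.subspace (S c) \<and> Jrel k phi \<subseteq> S c \<and> S c \<subseteq> Tens \<and> (\<forall>i. \<forall>f\<in>S c. lmul i f \<in> S c)" for c
    unfolding S_def using J_subspace J_Tens J_lmul sub[of c] by (auto simp: S_def)
  have ne: "S c \<noteq> Tens" for c
    unfolding S_def by (rule J_ne_Tens[OF char']) (use k2 in auto)
  have eqJ: "S c = Jrel k phi" for c
    using irr props[of c] ne[of c] unfolding quasi_whittaker_irreducible_def by blast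
  have w: "word ([] @ [k - 1]) - tscale (phi' c (k - 1)) (word []) \<in> S c" for c
    unfolding S_def by (rule whit_in_J) simp
  have w0: "word [k - 1] \<in> Jrel k phi"
    using w[of 0] eqJ[of 0] by (simp add: phi'_def fun_eq_iff pw)
  have w1: "word [k - 1] - word [] \<in> Jrel k phi"
    using w[of 1] eqJ[of 1] by (simp add: phi'_def fun_eq_iff pw)
  have "word [] \<in> Jrel k phi"
    using J_diff[OF w0 w1] by simp
  then have "Jrel k phi = Tens" by (rule J_all)
  then show False using irr unfolding quasi_whittaker_irreducible_def by blast
qed

end


definition Fs :: "nat \<Rightarrow> tens set" where
  "Fs m = {f \<in> Tens. \<forall>a. f a \<noteq> 0 \<longrightarrow> length a < m}"

definition Lo :: "nat \<Rightarrow> (nat \<Rightarrow> complex) \<Rightarrow> nat \<Rightarrow> tens set" where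
  "Lo k phi m = {f. \<exists>h\<in>Fs m. f - h \<in> Jrel k phi}"

lemma Fs_subspace: "T.subspace (Fs m)"
  unfolding T.subspace_def Fs_def
proof (auto simp: pw intro: Tens_add Tens_scale)
  fix x y :: tens and a
  assume "\<forall>a. x a \<noteq> 0 \<longrightarrow> length a < m" "\<forall>a. y a \<noteq> 0 \<longrightarrow> length a < m" "x a + y a \<noteq> 0"
  then show "length a < m" by (cases "x a = 0") auto
qed

lemma word_Fs: "length a < m \<Longrightarrow> word a \<in> Fs m"
  by (auto simp: Fs_def word_apply)

lemma Fs_Tens: "Fs m \<subseteq> Tens" by (auto simp: Fs_def)

lemma Lo_subspace: "T.subspace (Lo k phi m)"
proof (rule T.subspaceI)
  show "0 \<in> Lo k phi m" unfolding Lo_def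
    using T.subspace_0[OF Fs_subspace] J_zero by force
next
  fix x y assume "x \<in> Lo k phi m" "y \<in> Lo k phi m"
  then obtain hx hy where h: "hx \<in> Fs m" "x - hx \<in> Jrel k phi" "hy \<in> Fs m" "y - hy \<in> Jrel k phi"
    unfolding Lo_def by blast
  have eq: "(x + y) - (hx + hy) = (x - hx) + (y - hy)" by (simp add: algebra_simps)
  show "x + y \<in> Lo k phi m" unfolding Lo_def
  proof (intro CollectI bexI[of _ "hx + hy"])
    show "hx + hy \<in> Fs m" by (rule T.subspace_add[OF Fs_subspace h(1) h(3)])
    show "x + y - (hx + hy) \<in> Jrel k phi" unfolding eq by (rule J_add[OF h(2) h(4)])
  qed
next
  fix c x assume "x \<in> Lo k phi m"
  then obtain hx where h: "hx \<in> Fs m" "x - hx \<in> Jrel k phi"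
    unfolding Lo_def by blast
  have eq: "tscale c x - tscale c hx = tscale c (x - hx)" by (simp add: fun_eq_iff pw algebra_simps)
  show "tscale c x \<in> Lo k phi m" unfolding Lo_def
  proof (intro CollectI bexI[of _ "tscale c hx"])
    show "tscale c hx \<in> Fs m" by (rule T.subspace_scale[OF Fs_subspace h(1)])
    show "tscale c x - tscale c hx \<in> Jrel k phi" unfolding eq by (rule J_scale[OF h(2)])
  qed
qed

lemma Lo_add: "x \<in> Lo k phi m \<Longrightarrow> y \<in> Lo k phi m \<Longrightarrow> x + y \<in> Lo k phi m"
  using T.subspace_add[OF Lo_subspace] by blast
lemma Lo_diff: "x \<in> Lo k phi m \<Longrightarrow> y \<in> Lo k phi m \<Longrightarrow> x - y \<in> Lo k phi m"
  using T.subspace_diff[OF Lo_subspace] by blast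
lemma Lo_scale: "x \<in> Lo k phi m \<Longrightarrow> tscale c x \<in> Lo k phi m"
  using T.subspace_scale[OF Lo_subspace] by blast
lemma Lo_zero: "0 \<in> Lo k phi m"
  using T.subspace_0[OF Lo_subspace] by blast
lemma Lo_sum: "(\<And>a. a \<in> A \<Longrightarrow> f a \<in> Lo k phi m) \<Longrightarrow> sum f A \<in> Lo k phi m"
  using T.subspace_sum[OF Lo_subspace] by blast

lemma J_Lo: "x \<in> Jrel k phi \<Longrightarrow> x \<in> Lo k phi m"
  unfolding Lo_def using T.subspace_0[OF Fs_subspace] by force

lemma Fs_Lo: "x \<in> Fs m \<Longrightarrow> x \<in> Lo k phi m"
  unfolding Lo_def using J_zero by force

lemma word_Lo: "length a < m \<Longrightarrow> word a \<in> Lo k phi m"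
  by (rule Fs_Lo[OF word_Fs])

lemma Fs_mono: "m \<le> m' \<Longrightarrow> Fs m \<subseteq> Fs m'"
  by (auto simp: Fs_def)

lemma Lo_mono: "m \<le> m' \<Longrightarrow> x \<in> Lo k phi m \<Longrightarrow> x \<in> Lo k phi m'"
  unfolding Lo_def using Fs_mono by blast

lemma Lo_Tens: "x \<in> Lo k phi m \<Longrightarrow> x \<in> Tens"
proof -
  assume "x \<in> Lo k phi m"
  then obtain h where "h \<in> Fs m" "x - h \<in> Jrel k phi" unfolding Lo_def by blast
  then have "x - h \<in> Tens" "h \<in> Tens" using J_Tens[of k phi] Fs_Tens[of m] by (auto simp del: subset_iff)
  then have "(x - h) + h \<in> Tens" by (rule Tens_add)
  then show ?thesis by simp
qed

lemma Fs_0: "Fs 0 = {0}"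
proof
  show "Fs 0 \<subseteq> {0}"
  proof
    fix f assume "f \<in> Fs 0"
    then have "f a = 0" for a by (auto simp: Fs_def)
    then show "f \<in> {0}" by (simp add: fun_eq_iff pw)
  qed
qed (simp add: Fs_def pw)

lemma Lo_0: "Lo k phi 0 = Jrel k phi"
  unfolding Lo_def Fs_0 by (simp add: fun_eq_iff pw)

lemma Lo_lmul: "x \<in> Lo k phi m \<Longrightarrow> lmul i x \<in> Lo k phi (Suc m)"
proof -
  assume "x \<in> Lo k phi m"
  then obtain h where h: "h \<in> Fs m" "x - h \<in> Jrel k phi" unfolding Lo_def by blast
  have "lmul i h \<in> Fs (Suc m)"
  proof -
    have "lmul i h \<in> Tens" using h Fs_Tens by (intro lmul_Tens) auto
    moreover have "length a < Suc m" if "lmul i h a \<noteq> 0" for a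
      using that h(1) by (cases a) (auto simp: lmul_def Fs_def split: if_splits)
    ultimately show ?thesis by (auto simp: Fs_def)
  qed
  moreover have "lmul i x - lmul i h \<in> Jrel k phi"
    using J_lmul[OF h(2)] by (simp add: lmul_diff)
  ultimately show ?thesis unfolding Lo_def by blast
qed

lemma Lo_lmul0: "x \<in> Lo k phi 0 \<Longrightarrow> lmul i x \<in> Lo k phi 0"
  unfolding Lo_0 by (rule J_lmul)

lemma move_right: "k \<le> i \<Longrightarrow>
  word (a @ [i] @ b) - tscale (phi i) (word (a @ b)) \<in> Lo k phi (length a + length b)"
proof (induct b arbitrary: a i)
  case Nil
  then show ?case using whit_in_J[OF Nil, where phi=phi and a=a] by (simp add: J_Lo)
next
  case (Cons c b)
  let ?m = "length a + length (c # b)"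
  have e1: "word (a @ [i, c] @ b) - word (a @ [c, i] @ b)
               - tscale (of_int (int i - int c)) (word (a @ [i + c] @ b)) \<in> Lo k phi ?m"
    by (rule J_Lo[OF lie_in_J])
  have e2: "word ((a @ [c]) @ [i] @ b) - tscale (phi i) (word ((a @ [c]) @ b)) \<in> Lo k phi ?m"
    using Cons(1)[of i "a @ [c]"] Cons(2) by simp
  have e3: "word (a @ [i + c] @ b) - tscale (phi (i + c)) (word (a @ b)) \<in> Lo k phi ?m"
  proof -
    have "word (a @ [i + c] @ b) - tscale (phi (i + c)) (word (a @ b)) \<in> Lo k phi (length a + length b)"
      using Cons(1)[of "i + c" a] Cons(2) by simp
    then show ?thesis by (rule Lo_mono[rotated]) simp
  qed
  have e4: "word (a @ b) \<in> Lo k phi ?m" by (rule word_Lo) simp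
  have mem: "(word (a @ [i, c] @ b) - word (a @ [c, i] @ b)
               - tscale (of_int (int i - int c)) (word (a @ [i + c] @ b)))
       + (word ((a @ [c]) @ [i] @ b) - tscale (phi i) (word ((a @ [c]) @ b)))
       + tscale (of_int (int i - int c)) (word (a @ [i + c] @ b) - tscale (phi (i + c)) (word (a @ b)))
       + tscale (of_int (int i - int c) * phi (i + c)) (word (a @ b)) \<in> Lo k phi ?m"
    by (intro Lo_add Lo_scale e1 e2 e3 e4)
  have eq: "(word (a @ [i, c] @ b) - word (a @ [c, i] @ b)
               - tscale (of_int (int i - int c)) (word (a @ [i + c] @ b)))
       + (word ((a @ [c]) @ [i] @ b) - tscale (phi i) (word ((a @ [c]) @ b)))
       + tscale (of_int (int i - int c)) (word (a @ [i + c] @ b) - tscale (phi (i + c)) (word (a @ b)))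
       + tscale (of_int (int i - int c) * phi (i + c)) (word (a @ b))
     = word (a @ [i] @ c # b) - tscale (phi i) (word (a @ c # b))"
    by (simp add: fun_eq_iff pw algebra_simps)
  show ?case using mem unfolding eq by simp
qed

lemma swap_Lo: "word (p @ [x, y] @ q) - word (p @ [y, x] @ q) \<in> Lo k phi (length p + length q + 2)"
proof -
  have "(word (p @ [x, y] @ q) - word (p @ [y, x] @ q) - tscale (of_int (int x - int y)) (word (p @ [x + y] @ q)))
     + tscale (of_int (int x - int y)) (word (p @ [x + y] @ q)) \<in> Lo k phi (length p + length q + 2)"
    by (intro Lo_add Lo_scale J_Lo[OF lie_in_J] word_Lo) simp
  then show ?thesis by simp
qed

lemma front_Lo: "word (p @ a1 @ [x] @ a2) - word (p @ [x] @ a1 @ a2)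
   \<in> Lo k phi (length p + length a1 + length a2 + 1)"
proof (induct a1 arbitrary: p)
  case Nil then show ?case by (simp add: Lo_zero)
next
  case (Cons y a1)
  have e1: "word ((p @ [y]) @ a1 @ [x] @ a2) - word ((p @ [y]) @ [x] @ a1 @ a2)
     \<in> Lo k phi (length p + length (y # a1) + length a2 + 1)"
    using Cons[of "p @ [y]"] by simp
  have e2: "word (p @ [x, y] @ (a1 @ a2)) - word (p @ [y, x] @ (a1 @ a2))
     \<in> Lo k phi (length p + length (y # a1) + length a2 + 1)"
    using swap_Lo[of p x y "a1 @ a2" k phi] by (simp add: ac_simps)
  have "(word ((p @ [y]) @ a1 @ [x] @ a2) - word ((p @ [y]) @ [x] @ a1 @ a2))
     - (word (p @ [x, y] @ (a1 @ a2)) - word (p @ [y, x] @ (a1 @ a2)))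
     \<in> Lo k phi (length p + length (y # a1) + length a2 + 1)"
    by (rule Lo_diff[OF e1 e2])
  then show ?case by simp
qed

lemma perm_Lo: "mset a = mset b \<Longrightarrow> word a - word b \<in> Lo k phi (length a)"
proof (induct b arbitrary: a)
  case Nil then show ?case by (simp add: Lo_zero)
next
  case (Cons x b)
  have "x \<in> set a" using Cons(2) by (metis list.set_intros(1) set_mset_mset)
  then obtain a1 a2 where a: "a = a1 @ x # a2" by (meson split_list)
  have m: "mset (a1 @ a2) = mset b" using Cons(2) a by simp
  have l: "length a = Suc (length b)" using Cons(2) by (metis length_Cons size_mset)
  have e1: "lmul x (word (a1 @ a2) - word b) \<in> Lo k phi (length a)"
    using Lo_lmul[OF Cons(1)[OF m], of x] l m by (metis size_mset)
  have e2: "word ([] @ a1 @ [x] @ a2) - word ([] @ [x] @ a1 @ a2) \<in> Lo k phi (length a)"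
    using front_Lo[of "[]" a1 x a2 k phi] a by simp
  have "(word ([] @ a1 @ [x] @ a2) - word ([] @ [x] @ a1 @ a2)) + lmul x (word (a1 @ a2) - word b)
     \<in> Lo k phi (length a)" by (rule Lo_add[OF e2 e1])
  then show ?case using a by (simp add: lmul_diff)
qed

primrec der :: "(nat \<Rightarrow> complex) \<Rightarrow> nat \<Rightarrow> nat list \<Rightarrow> tens" where
  "der phi i [] = 0"
| "der phi i (x # a) = tscale (of_int (int i - int x) * phi (i + x)) (word a) + lmul x (der phi i a)"

lemma der_Tens: "der phi i a \<in> Tens"
  by (induct a) (auto intro: Tens_add Tens_scale lmul_Tens)

lemma der_Lo: "k \<le> i \<Longrightarrow>
  word (i # a) - tscale (phi i) (word a) - der phi i a \<in> Lo k phi (length a - 1)"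
proof (induct a)
  case Nil
  then show ?case using whit_in_J[OF Nil, where phi=phi and a="[]"] by (simp add: J_Lo)
next
  case (Cons x a)
  let ?m = "length (x # a) - 1"
  have e1: "word ([] @ [i, x] @ a) - word ([] @ [x, i] @ a)
               - tscale (of_int (int i - int x)) (word ([] @ [i + x] @ a)) \<in> Lo k phi ?m"
    by (rule J_Lo[OF lie_in_J])
  have e2: "word ([] @ [i + x] @ a) - tscale (phi (i + x)) (word ([] @ a)) \<in> Lo k phi ?m"
    using move_right[where k=k and i="i + x" and a="[]" and b=a and phi=phi] Cons(2) by simp
  note IH = Cons(1)[OF Cons(2)]
  have e3: "lmul x (word (i # a) - tscale (phi i) (word a) - der phi i a) \<in> Lo k phi ?m"
  proof (cases a)
    case Nil
    have "word (i # a) - tscale (phi i) (word a) - der phi i a \<in> Lo k phi 0"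
      using IH Nil by simp
    then show ?thesis using Lo_lmul0 Nil by simp
  next
    case (Cons y a')
    then show ?thesis using Lo_lmul[OF IH, of x] by simp
  qed
  have mem: "(word ([] @ [i, x] @ a) - word ([] @ [x, i] @ a)
               - tscale (of_int (int i - int x)) (word ([] @ [i + x] @ a)))
     + tscale (of_int (int i - int x)) (word ([] @ [i + x] @ a) - tscale (phi (i + x)) (word ([] @ a)))
     + lmul x (word (i # a) - tscale (phi i) (word a) - der phi i a) \<in> Lo k phi ?m"
    by (intro Lo_add Lo_scale e1 e2 e3)
  have eq: "(word ([] @ [i, x] @ a) - word ([] @ [x, i] @ a)
               - tscale (of_int (int i - int x)) (word ([] @ [i + x] @ a)))
     + tscale (of_int (int i - int x)) (word ([] @ [i + x] @ a) - tscale (phi (i + x)) (word ([] @ a)))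
     + lmul x (word (i # a) - tscale (phi i) (word a) - der phi i a)
     = word (i # x # a) - tscale (phi i) (word (x # a)) - der phi i (x # a)"
    by (simp add: lmul_diff lmul_add lmul_scale fun_eq_iff pw algebra_simps)
  show ?case using mem unfolding eq by simp
qed


definition cf :: "(nat \<Rightarrow> complex) \<Rightarrow> nat \<Rightarrow> nat \<Rightarrow> complex" where
  "cf phi i y = of_int (int i - int y) * phi (i + y)"

lemma count_Cons: "count (mset (x # a)) y = count (mset a) y + (if x = y then 1 else 0)"
  by simp

lemma der_sym: "set a \<subseteq> {..<k} \<Longrightarrow> a \<noteq> [] \<Longrightarrow>
  der phi i a - (\<Sum>y<k. tscale (cf phi i y * of_nat (count (mset a) y)) (word (sort (remove1 y a))))
   \<in> Lo k phi (length a - 1)"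
proof (induct a)
  case Nil then show ?case by simp
next
  case (Cons x a)
  have xk: "x < k" using Cons(2) by auto
  let ?W = "\<lambda>y. word (sort (remove1 y (x # a)))"
  let ?C = "(\<Sum>y<k. tscale (cf phi i y * of_nat (count (mset (x # a)) y)) (?W y))"
  let ?B = "(\<Sum>y<k. tscale (cf phi i y * of_nat (count (mset a) y)) (?W y))"
  have C_eq: "?C = ?B + tscale (cf phi i x) (?W x)"
  proof -
    have "?C = (\<Sum>y<k. tscale (cf phi i y * of_nat (count (mset a) y)) (?W y)
         + (if y = x then tscale (cf phi i x) (?W x) else 0))"
      by (intro sum.cong refl) (auto simp: algebra_simps fun_eq_iff pw)
    also have "\<dots> = ?B + tscale (cf phi i x) (?W x)"
      using xk by (simp add: sum.distrib)
    finally show ?thesis .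
  qed
  show ?case
  proof (cases "a = []")
    case True
    have "?C = tscale (cf phi i x) (word [])" using C_eq True by simp
    then show ?thesis using True by (simp add: Lo_zero cf_def)
  next
    case False
    let ?A = "(\<Sum>y<k. tscale (cf phi i y * of_nat (count (mset a) y)) (word (sort (remove1 y a))))"
    have IH: "der phi i a - ?A \<in> Lo k phi (length a - 1)"
      using Cons(1) Cons(2) False by auto
    have m: "Suc (length a - 1) = length (x # a) - 1" using False by simp
    have e1: "lmul x (der phi i a - ?A) \<in> Lo k phi (length (x # a) - 1)"
      using Lo_lmul[OF IH, of x] m by simp
    have e2: "tscale (cf phi i x) (word a - ?W x) \<in> Lo k phi (length (x # a) - 1)"
      by (intro Lo_scale) (use perm_Lo[of a "sort a" k phi] in simp)
    have e3: "lmul x ?A - ?B \<in> Lo k phi (length (x # a) - 1)"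
    proof -
      have "lmul x ?A - ?B = (\<Sum>y<k. tscale (cf phi i y * of_nat (count (mset a) y))
          (word (x # sort (remove1 y a)) - ?W y))"
        by (simp add: lmul_sum lmul_scale sum_subtractf T.scale_right_diff_distrib)
      also have "\<dots> \<in> Lo k phi (length (x # a) - 1)"
      proof (rule Lo_sum)
        fix y assume "y \<in> {..<k}"
        show "tscale (cf phi i y * of_nat (count (mset a) y)) (word (x # sort (remove1 y a)) - ?W y)
            \<in> Lo k phi (length (x # a) - 1)"
        proof (cases "y \<in> set a")
          case False
          then have "count (mset a) y = 0" by (simp add: count_mset_0_iff)
          then have c0: "of_nat (count (mset a) y) = (0::complex)" by simp
          show ?thesis by (simp only: c0 mult_zero_right T.scale_zero_left Lo_zero)
        next
          case True
          have ms: "mset (x # sort (remove1 y a)) = mset (sort (remove1 y (x # a)))"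
            using True by (auto simp: mset_remove1)
          have "length (x # sort (remove1 y a)) = length (x # a) - 1"
          proof -
            have "length a \<noteq> 0" using True by auto
            then show ?thesis using True by (simp add: length_remove1)
          qed
          then show ?thesis using perm_Lo[OF ms, of k phi] by (intro Lo_scale) simp
        qed
      qed
      finally show ?thesis .
    qed
    have "der phi i (x # a) - ?C = tscale (cf phi i x) (word a - ?W x) + lmul x (der phi i a - ?A) + (lmul x ?A - ?B)"
      unfolding C_eq by (simp add: lmul_diff cf_def T.scale_right_diff_distrib algebra_simps)
    moreover have "tscale (cf phi i x) (word a - ?W x) + lmul x (der phi i a - ?A) + (lmul x ?A - ?B)
       \<in> Lo k phi (length (x # a) - 1)"
      by (intro Lo_add e1 e2 e3)
    ultimately show ?thesis by simp
  qed
qed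


lemma diff_chain: "(a - b) + (b - c) = (a::'a::ab_group_add) - c" by simp

definition supp :: "tens \<Rightarrow> nat list set" where "supp h = {a. h a \<noteq> 0}"

definition Dh :: "nat \<Rightarrow> (nat \<Rightarrow> complex) \<Rightarrow> nat \<Rightarrow> tens \<Rightarrow> tens" where
  "Dh k phi i h = (\<Sum>a\<in>supp h. tscale (h a)
     (\<Sum>y<k. tscale (cf phi i y * of_nat (count (mset a) y)) (word (sort (remove1 y a)))))"

definition dd :: "nat \<Rightarrow> tens \<Rightarrow> tens" where
  "dd y h = (\<Sum>a\<in>supp h. tscale (h a * of_nat (count (mset a) y)) (word (sort (remove1 y a))))"

definition good :: "nat \<Rightarrow> nat \<Rightarrow> tens \<Rightarrow> bool" where
  "good k r h \<longleftrightarrow> h \<in> Tens \<and> (\<forall>a. h a \<noteq> 0 \<longrightarrow> length a = r \<and> sorted a \<and> set a \<subseteq> {..<k})"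

definition Ld :: "(nat \<Rightarrow> complex) \<Rightarrow> nat \<Rightarrow> tens \<Rightarrow> tens" where
  "Ld phi i f = lmul i f - tscale (phi i) f"

lemma Dh_dd: "Dh k phi i h = (\<Sum>y<k. tscale (cf phi i y) (dd y h))"
proof -
  have "Dh k phi i h = (\<Sum>a\<in>supp h. \<Sum>y<k. tscale (cf phi i y) (tscale (h a * of_nat (count (mset a) y)) (word (sort (remove1 y a)))))"
    unfolding Dh_def T.scale_sum_right by (intro sum.cong refl) (simp add: ac_simps)
  also have "\<dots> = (\<Sum>y<k. \<Sum>a\<in>supp h. tscale (cf phi i y) (tscale (h a * of_nat (count (mset a) y)) (word (sort (remove1 y a)))))"
    by (rule sum.swap)
  also have "\<dots> = (\<Sum>y<k. tscale (cf phi i y) (dd y h))"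
    unfolding dd_def T.scale_sum_right ..
  finally show ?thesis .
qed

lemma Ld_add: "Ld phi i (f + g) = Ld phi i f + Ld phi i g"
  by (simp add: Ld_def lmul_add T.scale_right_distrib algebra_simps)
lemma Ld_diff: "Ld phi i (f - g) = Ld phi i f - Ld phi i g"
  by (simp add: Ld_def lmul_diff T.scale_right_diff_distrib algebra_simps)
lemma Ld_scale: "Ld phi i (tscale c f) = tscale c (Ld phi i f)"
  by (simp add: Ld_def lmul_scale T.scale_right_diff_distrib mult.commute)
lemma Ld_sum: "Ld phi i (sum f A) = (\<Sum>a\<in>A. Ld phi i (f a))"
  by (simp add: Ld_def lmul_sum T.scale_sum_right sum_subtractf)

lemma Ld_J: "f \<in> Jrel k phi \<Longrightarrow> Ld phi i f \<in> Jrel k phi"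
  unfolding Ld_def by (intro J_diff J_lmul J_scale)

lemma Ld_down: assumes i: "k \<le> i" and f: "f \<in> Lo k phi (Suc r)" shows "Ld phi i f \<in> Lo k phi r"
proof -
  obtain u where u: "u \<in> Fs (Suc r)" "f - u \<in> Jrel k phi" using f unfolding Lo_def by blast
  have uT: "u \<in> Tens" using u Fs_Tens by blast
  have "Ld phi i u = (\<Sum>a\<in>supp u. tscale (u a) (Ld phi i (word a)))"
    by (subst tens_decomp'[OF uT]) (simp add: Ld_sum Ld_scale supp_def)
  also have "\<dots> \<in> Lo k phi r"
  proof (intro Lo_sum Lo_scale)
    fix a assume "a \<in> supp u"
    then have la: "length a \<le> r" using u(1) by (auto simp: Fs_def supp_def)
    have "Ld phi i (word a) \<in> Lo k phi (length a)"
      using move_right[where k=k and i=i and a="[]" and b=a and phi=phi] i by (simp add: Ld_def)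
    then show "Ld phi i (word a) \<in> Lo k phi r" using la by (rule Lo_mono[rotated])
  qed
  finally have e1: "Ld phi i u \<in> Lo k phi r" .
  have e2: "Ld phi i (f - u) \<in> Lo k phi r" by (rule J_Lo[OF Ld_J[OF u(2)]])
  have "Ld phi i (f - u) + Ld phi i u \<in> Lo k phi r" by (rule Lo_add[OF e2 e1])
  then show ?thesis by (simp add: Ld_diff)
qed

lemma good_Tens: "good k r h \<Longrightarrow> h \<in> Tens" by (simp add: good_def)

lemma finite_supp: "h \<in> Tens \<Longrightarrow> finite (supp h)" by (simp add: supp_def Tens_def)

lemma step_lemma:
  assumes g: "good k (Suc r) h" and gh: "f - h \<in> Lo k phi (Suc r)" and i: "k \<le> i"
  shows "Ld phi i f - Dh k phi i h \<in> Lo k phi r"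
proof -
  have hT: "h \<in> Tens" using g by (simp add: good_def)
  have e1: "Ld phi i (f - h) \<in> Lo k phi r" by (rule Ld_down[OF i gh])
  let ?Y = "\<lambda>a. (\<Sum>y<k. tscale (cf phi i y * of_nat (count (mset a) y)) (word (sort (remove1 y a))))"
  have "Ld phi i h - Dh k phi i h = (\<Sum>a\<in>supp h. tscale (h a)
      ((word (i # a) - tscale (phi i) (word a)) - ?Y a))"
  proof -
    have L: "Ld phi i h = (\<Sum>a\<in>supp h. tscale (h a) (Ld phi i (word a)))"
      by (subst tens_decomp'[OF hT]) (simp add: Ld_sum Ld_scale supp_def)
    show ?thesis unfolding Dh_def L
      by (simp only: sum_subtractf[symmetric] T.scale_right_diff_distrib[symmetric] Ld_def lmul_word)
  qed
  also have "\<dots> \<in> Lo k phi r"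
  proof (intro Lo_sum Lo_scale)
    fix a assume "a \<in> supp h"
    then have a: "length a = Suc r" "set a \<subseteq> {..<k}" using g by (auto simp: good_def supp_def)
    then have ne: "a \<noteq> []" by auto
    have x1: "word (i # a) - tscale (phi i) (word a) - der phi i a \<in> Lo k phi r"
      using der_Lo[OF i, of a phi] a by simp
    have x2: "der phi i a - ?Y a \<in> Lo k phi r"
      using der_sym[OF a(2) ne, of phi i] a by simp
    have "(word (i # a) - tscale (phi i) (word a) - der phi i a) + (der phi i a - ?Y a) \<in> Lo k phi r"
      by (rule Lo_add[OF x1 x2])
    then show "(word (i # a) - tscale (phi i) (word a)) - ?Y a \<in> Lo k phi r" by (simp only: diff_chain)
  qed
  finally have e2: "Ld phi i h - Dh k phi i h \<in> Lo k phi r" .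
  have "Ld phi i (f - h) + (Ld phi i h - Dh k phi i h) \<in> Lo k phi r" by (rule Lo_add[OF e1 e2])
  then show ?thesis by (simp add: Ld_diff)
qed


lemma Dh_Tens: "h \<in> Tens \<Longrightarrow> Dh k phi i h \<in> Tens"
  unfolding Dh_def by (intro Tens_sum Tens_scale word_Tens)

lemma Dh_nz: assumes "Dh k phi i h b \<noteq> 0"
  shows "\<exists>a\<in>supp h. \<exists>y<k. count (mset a) y \<noteq> 0 \<and> b = sort (remove1 y a)"
proof -
  have "(\<Sum>a\<in>supp h. h a * (\<Sum>y<k. (cf phi i y * of_nat (count (mset a) y)) * word (sort (remove1 y a)) b)) \<noteq> 0"
    using assms by (simp add: Dh_def sum_fun_apply tscale_apply)
  then obtain a where a: "a \<in> supp h" "h a * (\<Sum>y<k. (cf phi i y * of_nat (count (mset a) y)) * word (sort (remove1 y a)) b) \<noteq> 0"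
    using sum.not_neutral_contains_not_neutral by blast
  then have "(\<Sum>y<k. (cf phi i y * of_nat (count (mset a) y)) * word (sort (remove1 y a)) b) \<noteq> 0" by auto
  then obtain y where y: "y < k" "(cf phi i y * of_nat (count (mset a) y)) * word (sort (remove1 y a)) b \<noteq> 0"
    using sum.not_neutral_contains_not_neutral by blast
  then have "count (mset a) y \<noteq> 0" "b = sort (remove1 y a)" by (auto simp: word_apply split: if_splits)
  then show ?thesis using a y by blast
qed

lemma good_Dh: assumes g: "good k (Suc r) h" shows "good k r (Dh k phi i h)"
proof -
  have T: "Dh k phi i h \<in> Tens" using g by (intro Dh_Tens) (simp add: good_def)
  have "length b = r \<and> sorted b \<and> set b \<subseteq> {..<k}" if "Dh k phi i h b \<noteq> 0" for b
  proof -
  from that obtain a y where a: "a \<in> supp h" "count (mset a) y \<noteq> 0" "b = sort (remove1 y a)"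
    using Dh_nz by blast
  have ga: "length a = Suc r" "set a \<subseteq> {..<k}" using g a(1) by (auto simp: good_def supp_def)
  have ya: "y \<in> set a" using a(2) by (simp add: count_mset_0_iff)
  show "length b = r \<and> sorted b \<and> set b \<subseteq> {..<k}"
    using a(3) ga ya set_remove1_subset[of y a] by (auto simp: length_remove1)
  qed
  then show ?thesis using T unfolding good_def by blast
qed

lemma sort_eq_mset: "mset a = mset b \<Longrightarrow> sort a = sort b"
  by (metis sorted_list_of_multiset_mset)

lemma nonzero_dd:
  assumes g: "good k (Suc r) h" and h0: "h \<noteq> 0"
  shows "\<exists>y<k. dd y h \<noteq> 0"
proof -
  obtain a where ha: "h a \<noteq> 0" using h0 by (auto simp: fun_eq_iff pw)
  have ga: "length a = Suc r" "sorted a" "set a \<subseteq> {..<k}" using g ha by (auto simp: good_def)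
  then have ne: "a \<noteq> []" by auto
  define y where "y = hd a"
  have ya: "y \<in> set a" using ne by (simp add: y_def)
  then have yk: "y < k" using ga by auto
  define b where "b = sort (remove1 y a)"
  have fin: "finite (supp h)" using g by (simp add: good_def finite_supp)
  have asupp: "a \<in> supp h" using ha by (simp add: supp_def)
  have other: "(h a' * of_nat (count (mset a') y)) * word (sort (remove1 y a')) b = 0"
    if a': "a' \<in> supp h - {a}" for a'
  proof (cases "count (mset a') y = 0")
    case True then show ?thesis by simp
  next
    case False
    then have ya': "y \<in> set a'" by (simp add: count_mset_0_iff)
    have ga': "sorted a'" using a' g by (auto simp: good_def supp_def)
    have "sort (remove1 y a') \<noteq> b"
    proof
      assume "sort (remove1 y a') = b"
      then have "mset (remove1 y a') = mset (remove1 y a)"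
        unfolding b_def by (metis mset_sort)
      then have "mset a' = mset a" using ya ya'
        by (metis insert_DiffM mset_remove1 set_mset_mset)
      then have "sort a' = sort a" by (rule sort_eq_mset)
      then have "a' = a" using ga(2) ga' by (simp add: sorted_sort_id)
      then show False using a' by simp
    qed
    then show ?thesis by (simp add: word_apply)
  qed
  have "dd y h b = (\<Sum>a'\<in>supp h. (h a' * of_nat (count (mset a') y)) * word (sort (remove1 y a')) b)"
    by (simp add: dd_def sum_fun_apply tscale_apply)
  also have "\<dots> = (h a * of_nat (count (mset a) y)) * word (sort (remove1 y a)) b
     + (\<Sum>a'\<in>supp h - {a}. (h a' * of_nat (count (mset a') y)) * word (sort (remove1 y a')) b)"
    using fin asupp by (simp add: sum.remove)
  also have "\<dots> = h a * of_nat (count (mset a) y)"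
  proof -
    have "(\<Sum>a'\<in>supp h - {a}. (h a' * of_nat (count (mset a') y)) * word (sort (remove1 y a')) b) = 0"
      by (rule sum.neutral) (use other in blast)
    then show ?thesis by (simp add: b_def word_apply)
  qed
  also have "\<dots> \<noteq> 0" using ha ya by (simp add: count_mset_0_iff)
  finally show ?thesis using yk by (auto simp: pw)
qed


lemma tscale_eq0: "tscale c f = 0 \<Longrightarrow> c \<noteq> 0 \<Longrightarrow> f = 0"
  by (simp add: fun_eq_iff pw)

context
  fixes k :: nat and phi :: "nat \<Rightarrow> complex"
  assumes char: "\<forall>m\<ge>k. \<forall>n\<ge>k. of_int (int m - int n) * phi (m + n) = 0"
begin

lemma tri_coeff:
  assumes k1: "k \<ge> 1" and ne: "phi (2 * k - 1) \<noteq> 0 \<or> phi (2 * k) \<noteq> 0" and y: "y < k"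
  shows "\<exists>i\<ge>k. cf phi i y \<noteq> 0 \<and> (\<forall>y'. y < y' \<longrightarrow> cf phi i y' = 0)"
proof (cases "phi (2 * k) = 0")
  case False
  define i where "i = 2 * k - y"
  have ik: "i \<ge> k" using y by (simp add: i_def)
  have "int i - int y \<noteq> 0" using y by (simp add: i_def)
  then have c: "cf phi i y \<noteq> 0" using False y by (simp add: cf_def i_def)
  have "cf phi i y' = 0" if "y < y'" for y'
  proof -
    have "i + y' \<ge> 2 * k + 1" using that y by (simp add: i_def)
    then show ?thesis by (simp add: cf_def psi_vanish[OF char])
  qed
  then show ?thesis using ik c by blast
next
  case True
  then have p1: "phi (2 * k - 1) \<noteq> 0" using ne by auto
  define i where "i = 2 * k - 1 - y"
  have ik: "i \<ge> k" using y by (simp add: i_def)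
  have "int i - int y \<noteq> 0"
  proof
    assume "int i - int y = 0"
    then have "2 * k - 1 = 2 * y" using y by (simp add: i_def)
    then show False using k1 by presburger
  qed
  moreover have "i + y = 2 * k - 1" using y by (simp add: i_def)
  ultimately have c: "cf phi i y \<noteq> 0" using p1 by (simp add: cf_def)
  have "cf phi i y' = 0" if "y < y'" for y'
  proof -
    have "i + y' = 2 * k \<or> i + y' \<ge> 2 * k + 1" using that y by (auto simp: i_def)
    then show ?thesis using True by (auto simp: cf_def psi_vanish[OF char])
  qed
  then show ?thesis using ik c by blast
qed

lemma tri:
  assumes k1: "k \<ge> 1" and ne: "phi (2 * k - 1) \<noteq> 0 \<or> phi (2 * k) \<noteq> 0"
    and all: "\<forall>i\<ge>k. Dh k phi i h = 0"
  shows "y < k \<Longrightarrow> dd y h = 0"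
proof (induct y rule: less_induct)
  case (less y)
  obtain i where i: "i \<ge> k" "cf phi i y \<noteq> 0" "\<forall>y'. y < y' \<longrightarrow> cf phi i y' = 0"
    using tri_coeff[OF k1 ne less(2)] by blast
  have "0 = Dh k phi i h" using all i by simp
  also have "\<dots> = (\<Sum>y'<k. tscale (cf phi i y') (dd y' h))" by (rule Dh_dd)
  also have "\<dots> = tscale (cf phi i y) (dd y h) + (\<Sum>y'\<in>{..<k} - {y}. tscale (cf phi i y') (dd y' h))"
    using less(2) by (simp add: sum.remove)
  also have "(\<Sum>y'\<in>{..<k} - {y}. tscale (cf phi i y') (dd y' h)) = 0"
  proof (rule sum.neutral, rule ballI)
    fix y' assume y': "y' \<in> {..<k} - {y}"
    show "tscale (cf phi i y') (dd y' h) = 0"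
    proof (cases "y' < y")
      case True
      then have "dd y' h = 0" using less(1) less(2) by auto
      then show ?thesis by (simp add: fun_eq_iff pw)
    next
      case False
      then have "y < y'" using y' by auto
      then have "cf phi i y' = 0" using i by auto
      then show ?thesis by (simp add: fun_eq_iff pw)
    qed
  qed
  finally have "tscale (cf phi i y) (dd y h) = 0" by simp
  then show ?case using i(2) by (rule tscale_eq0)
qed

lemma descent:
  assumes k1: "k \<ge> 1" and ne: "phi (2 * k - 1) \<noteq> 0 \<or> phi (2 * k) \<noteq> 0"
    and sub: "T.subspace S" and JS: "Jrel k phi \<subseteq> S" and cl: "\<forall>i. \<forall>f\<in>S. lmul i f \<in> S"
  shows "g \<in> S \<Longrightarrow> good k r h \<Longrightarrow> h \<noteq> 0 \<Longrightarrow> g - h \<in> Lo k phi r \<Longrightarrow> word [] \<in> S"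
proof (induct r arbitrary: g h)
  case 0
  have supp0: "h a = 0" if "a \<noteq> []" for a using 0(2) that by (auto simp: good_def)
  have h_eq: "h = tscale (h []) (word [])"
  proof
    fix a show "h a = tscale (h []) (word []) a"
      by (cases "a = []") (auto simp: pw word_apply supp0)
  qed
  have h0: "h [] \<noteq> 0"
  proof
    assume "h [] = 0"
    then have "h = 0" using h_eq by (simp add: fun_eq_iff pw)
    then show False using 0(3) by simp
  qed
  have gh: "g - h \<in> S" using 0(4) JS by (simp add: Lo_0 subset_iff)
  have "g - (g - h) \<in> S" by (rule T.subspace_diff[OF sub 0(1) gh])
  then have "h \<in> S" by simp
  then have "tscale (1 / h []) h \<in> S" using sub by (simp add: T.subspace_scale)
  moreover have "tscale (1 / h []) h = word []"
    using h0 by (subst h_eq) (simp add: fun_eq_iff pw)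
  ultimately show ?case by simp
next
  case (Suc r)
  obtain y where y: "y < k" "dd y h \<noteq> 0" using nonzero_dd[OF Suc(3) Suc(4)] by blast
  obtain i where i: "i \<ge> k" "Dh k phi i h \<noteq> 0"
    using tri[OF k1 ne _ y(1)] y(2) by blast
  have g': "Ld phi i g \<in> S"
    unfolding Ld_def using Suc(2) cl sub by (intro T.subspace_diff T.subspace_scale) auto
  have st: "Ld phi i g - Dh k phi i h \<in> Lo k phi r" by (rule step_lemma[OF Suc(3) Suc(5) i(1)])
  show ?case by (rule Suc(1)[OF g' good_Dh[OF Suc(3)] i(2) st])
qed

end


lemma sum_word_nz: "(\<Sum>x\<in>A. tscale (c x) (word (w x))) b \<noteq> 0 \<Longrightarrow> \<exists>x\<in>A. w x = b"
proof -
  assume "(\<Sum>x\<in>A. tscale (c x) (word (w x))) b \<noteq> 0"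
  then have "(\<Sum>x\<in>A. c x * word (w x) b) \<noteq> 0" by (simp add: sum_fun_apply tscale_apply)
  then obtain x where "x \<in> A" "c x * word (w x) b \<noteq> 0"
    using sum.not_neutral_contains_not_neutral by blast
  then show ?thesis by (auto simp: word_apply split: if_splits)
qed

context
  fixes k :: nat and phi :: "nat \<Rightarrow> complex"
  assumes char: "\<forall>m\<ge>k. \<forall>n\<ge>k. of_int (int m - int n) * phi (m + n) = 0"
begin

lemma start:
  assumes f: "f \<in> Tens" and nJ: "f \<notin> Jrel k phi"
  shows "\<exists>r h. good k r h \<and> h \<noteq> 0 \<and> f - h \<in> Lo k phi r"
proof -
  have ex: "\<exists>m. f \<in> Lo k phi m"
  proof -
    let ?M = "Suc (Max (insert 0 (length ` supp f)))"
    have fin: "finite (insert 0 (length ` supp f))" using finite_supp[OF f] by simp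
    have "length a < ?M" if "f a \<noteq> 0" for a
    proof -
      have "length a \<in> insert 0 (length ` supp f)" using that by (simp add: supp_def)
      then have "length a \<le> Max (insert 0 (length ` supp f))" using fin by (rule Max_ge[rotated])
      then show ?thesis by simp
    qed
    then have "f \<in> Fs ?M" unfolding Fs_def using f by blast
    then show ?thesis using Fs_Lo by blast
  qed
  define m where "m = (LEAST m. f \<in> Lo k phi m)"
  have fm: "f \<in> Lo k phi m" unfolding m_def by (rule LeastI_ex[OF ex])
  have m0: "m \<noteq> 0"
  proof
    assume "m = 0"
    then show False using fm nJ by (simp add: Lo_0)
  qed
  then obtain r where r: "m = Suc r" by (cases m) auto
  have nfr: "f \<notin> Lo k phi r"
    using not_less_Least[of r "\<lambda>m. f \<in> Lo k phi m"] r m_def by auto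
  obtain u where u: "u \<in> Fs (Suc r)" "f - u \<in> Jrel k phi" using fm r unfolding Lo_def by blast
  have uT: "u \<in> Tens" using u Fs_Tens by blast
  have finu: "finite (supp u)" by (rule finite_supp[OF uT])
  let ?P = "\<lambda>a. length a = r \<and> set a \<subseteq> {..<k}"
  define h where "h = (\<Sum>a\<in>{a \<in> supp u. ?P a}. tscale (u a) (word (sort a)))"
  have hT: "h \<in> Tens" unfolding h_def by (intro Tens_sum Tens_scale word_Tens)
  have "length b = r \<and> sorted b \<and> set b \<subseteq> {..<k}" if "h b \<noteq> 0" for b
  proof -
    from that obtain a where "a \<in> {a \<in> supp u. ?P a}" "sort a = b"
      unfolding h_def using sum_word_nz by blast
    then show ?thesis by auto
  qed
  then have good: "good k r h" using hT unfolding good_def by blast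
  have uh: "u - h \<in> Lo k phi r"
  proof -
    have hs: "h = (\<Sum>a\<in>supp u. if ?P a then tscale (u a) (word (sort a)) else 0)"
      unfolding h_def using finu by (rule sum.inter_filter)
    have "u - h = (\<Sum>a\<in>supp u. tscale (u a) (word a)) - (\<Sum>a\<in>supp u. if ?P a then tscale (u a) (word (sort a)) else 0)"
      unfolding hs by (subst tens_decomp'[OF uT]) (simp add: supp_def)
    also have "\<dots> = (\<Sum>a\<in>supp u. tscale (u a) (word a) - (if ?P a then tscale (u a) (word (sort a)) else 0))"
      by (simp add: sum_subtractf)
    also have "\<dots> \<in> Lo k phi r"
    proof (rule Lo_sum)
      fix a assume a: "a \<in> supp u"
      then have la: "length a \<le> r" using u(1) by (auto simp: Fs_def supp_def)
      show "tscale (u a) (word a) - (if ?P a then tscale (u a) (word (sort a)) else 0) \<in> Lo k phi r"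
      proof (cases "?P a")
        case True
        have "word a - word (sort a) \<in> Lo k phi (length a)" by (rule perm_Lo) simp
        then have "tscale (u a) (word a - word (sort a)) \<in> Lo k phi r" using True by (intro Lo_scale) simp
        then show ?thesis using True by (simp add: T.scale_right_diff_distrib)
      next
        case False
        have "word a \<in> Lo k phi r"
        proof (cases "length a < r")
          case True then show ?thesis by (rule word_Lo)
        next
          case False
          then have lr: "length a = r" using la by simp
          then have "\<not> set a \<subseteq> {..<k}" using \<open>\<not> ?P a\<close> by simp
          then obtain i where i: "i \<in> set a" "k \<le> i" by (meson lessThan_iff not_le subsetI)
          then obtain a1 a2 where a12: "a = a1 @ i # a2" by (meson split_list)
          have e1: "word (a1 @ [i] @ a2) - tscale (phi i) (word (a1 @ a2)) \<in> Lo k phi r"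
            using move_right[where k=k and phi=phi and i=i and a=a1 and b=a2] i(2) lr a12
            by (auto intro: Lo_mono[rotated])
          have e2: "tscale (phi i) (word (a1 @ a2)) \<in> Lo k phi r"
            using lr a12 by (intro Lo_scale word_Lo) simp
          have "(word (a1 @ [i] @ a2) - tscale (phi i) (word (a1 @ a2))) + tscale (phi i) (word (a1 @ a2)) \<in> Lo k phi r"
            by (rule Lo_add[OF e1 e2])
          then show ?thesis using a12 by simp
        qed
        then show ?thesis by (subst if_not_P[OF False]) (simp add: Lo_scale)
      qed
    qed
    finally show ?thesis .
  qed
  have fh: "f - h \<in> Lo k phi r"
  proof -
    have "(f - u) + (u - h) \<in> Lo k phi r" by (rule Lo_add[OF J_Lo[OF u(2)] uh])
    then show ?thesis by simp
  qed
  have "h \<noteq> 0"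
  proof
    assume "h = 0"
    then show False using fh nfr by simp
  qed
  then show ?thesis using good fh by blast
qed

lemma if_part:
  assumes k1: "k \<ge> 1" and ne: "phi (2 * k - 1) \<noteq> 0 \<or> phi (2 * k) \<noteq> 0"
  shows "quasi_whittaker_irreducible k phi"
  unfolding quasi_whittaker_irreducible_def
proof (intro conjI allI impI)
  show "Jrel k phi \<noteq> Tens" by (rule J_ne_Tens[OF char k1])
  fix S assume S: "T.subspace S \<and> Jrel k phi \<subseteq> S \<and> S \<subseteq> Tens \<and> (\<forall>i. \<forall>f\<in>S. lmul i f \<in> S)"
  show "S = Jrel k phi \<or> S = Tens"
  proof (cases "S = Jrel k phi")
    case True then show ?thesis by simp
  next
    case False
    then obtain f where f: "f \<in> S" "f \<notin> Jrel k phi" using S by blast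
    have fT: "f \<in> Tens" using f S by blast
    obtain r h where rh: "good k r h" "h \<noteq> 0" "f - h \<in> Lo k phi r"
      using start[OF fT f(2)] by blast
    have "word [] \<in> S"
      using descent[OF char k1 ne] S f(1) rh by blast
    then have "Tens \<subseteq> S" using all_from_empty S by blast
    then show ?thesis using S by blast
  qed
qed

end


theorem theorem4p9:
  fixes k :: nat and phi :: "nat \<Rightarrow> complex"
  assumes "k \<ge> 1"
    and "\<forall>m\<ge>k. \<forall>n\<ge>k. of_int (int m - int n) * phi (m + n) = 0"
    and "\<exists>i\<ge>k. phi i \<noteq> 0"
  shows "quasi_whittaker_irreducible k phi \<longleftrightarrow> phi (2 * k - 1) \<noteq> 0 \<or> phi (2 * k) \<noteq> 0"
  using only_if_part[OF assms(2) assms(1) assms(3)] if_part[OF assms(2) assms(1)] by blast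

end
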